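(* Let $\rho>0$, $\alpha>0$, $\Omega_t\in\mathbb{S}^n$, $\bar W_t\in\mathbb{S}^n_+$ with $\operatorname{tr}(\bar W_t)=1$, $P_t\in\mathbb{R}^{n\times r}$ with $P_t^\top P_t=I_r$, and integers $r_p\ge0$, $r_c\ge1$ with $r_p\le r$. Let $(W_t^\star,y_t^\star)$ be a minimizer of $\min_{W\in\hat{\mathcal W}(\bar W_t,P_t),y\in\mathbb{R}^m}\langle W-C,\Omega_t\rangle-\langle b-\mathcal{A}(\Omega_t),y\rangle+\frac1{2\alpha}\|W-C+\mathcal{A}^*(y)\|^2$, written as $W_t^\star=\gamma_t^\star\bar W_t+P_tS_t^\star P_t^\top$ with $S_t^\star\in\mathbb{S}^r_+$, $\gamma_t^\star\ge0$, $\gamma_t^\star+\operatorname{tr}(S_t^\star)\le\rho$, and let $X_{t+1}^\star:=\Omega_t+\frac1\alpha(W_t^\star-C+\mathcal{A}^*(y_t^\star))$. Write an eigendecomposition $S_t^\star=Q_1\Sigma_1Q_1^\top+Q_2\Sigma_2Q_2^\top$ where $[Q_1\ Q_2]$ is orthogonal, $\Sigma_1\in\mathbb{S}^{r_p}$ is diagonal with the $r_p$ largest eigenvalues of $S_t^\star$ and $\Sigma_2$ diagonal with the remaining ones. Let $V_t\in\mathbb{R}^{n\times r_c}$ have orthonormal columns that are eigenvectors of $-X_{t+1}^\star$ for its $r_c$ largest eigenvalues. Let $P_{t+1}$ be any matrix with orthonormal columns whose column space equals that of $[V_t\ \ P_tQ_1]$, assume $\gamma_t^\star+\operatorname{tr}(\Sigma_2)>0$,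 and set $\bar W_{t+1}:=\frac{1}{\gamma_t^\star+\operatorname{tr}(\Sigma_2)}\big(\gamma_t^\star\bar W_t+P_tQ_2\Sigma_2Q_2^\top P_t^\top\big)$. Then, writing $\hat F_{t}:=\hat F_{(\bar W_t,P_t)}$ and $\hat F_{t+1}:=\hat F_{(\bar W_{t+1},P_{t+1})}$: (i) $\hat F_{t+1}(X)\le F(X)$ for all $X\in\mathbb{S}^n$; (ii) $\hat F_{t+1}(X)\ge F(X_{t+1}^\star)+\langle g,X-X_{t+1}^\star\rangle$ for all $X\in\mathbb{S}^n$, where $g=C-\rho vv^\top$ with $v$ the first column of $V_t$ if $\lambda_{\max}(-X_{t+1}^\star)>0$, and $g=C$ otherwise (in both cases $g\in\partial F(X_{t+1}^\star)$); (iii) if $\mathcal{A}(\Omega_t)$ is arbitrary but $X\in\mathcal{X}_0$, then $\hat F_{t+1}(X)\ge \hat F_t(X_{t+1}^\star)+\langle \alpha(\Omega_t-X_{t+1}^\star),X-X_{t+1}^\star\rangle$ for all $X\in\mathcal{X}_0$.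
   Context: Data: $b\in\mathbb{R}^m$, $C,A_1,\dots,A_m\in\mathbb{S}^n$ with $A_1,\dots,A_m$ linearly independent; $\langle X,Y\rangle=\operatorname{tr}(XY)$, $\|\cdot\|$ Frobenius norm; $\mathcal{A}(X)=(\langle A_i,X\rangle)_{i=1}^m$, $\mathcal{A}^*(y)=\sum_iy_iA_i$; $\mathcal{X}_0:=\{X\in\mathbb{S}^n:\mathcal{A}(X)=b\}$. $F(X):=\langle C,X\rangle+\rho\max\{\lambda_{\max}(-X),0\}$. For $\bar W\succeq0$ with trace $1$ and $P$ with orthonormal columns ($k$ columns): $\hat{\mathcal W}(\bar W,P):=\{\gamma\bar W+PSP^\top: S\in\mathbb{S}^k_+,\gamma\ge0,\gamma+\operatorname{tr}(S)\le\rho\}$ and $\hat F_{(\bar W,P)}(X):=\langle C,X\rangle+\max_{W\in\hat{\mathcal W}(\bar W,P)}\langle W,-X\rangle$. ($X_{t+1}^\star$ is the minimizer over $\mathcal{X}_0$ of $\hat F_t(X)+\frac\alpha2\|X-\Omega_t\|^2$.) *)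

theory Defs
  imports "Jordan_Normal_Form.Matrix" "Jordan_Normal_Form.Char_Poly"
begin

definition mtrace :: "real mat \<Rightarrow> real" where
  "mtrace A = (\<Sum>i<dim_row A. A $$ (i, i))"

definition frob :: "real mat \<Rightarrow> real mat \<Rightarrow> real" where
  "frob X Y = mtrace (X * Y)"

definition fnorm :: "real mat \<Rightarrow> real" where
  "fnorm X = sqrt (frob (transpose_mat X) X)"

definition symm :: "nat \<Rightarrow> real mat \<Rightarrow> bool" where
  "symm k X \<longleftrightarrow> X \<in> carrier_mat k k \<and> transpose_mat X = X"

definition psd :: "nat \<Rightarrow> real mat \<Rightarrow> bool" where
  "psd k X \<longleftrightarrow> symm k X \<and> (\<forall>v \<in> carrier_vec k. 0 \<le> v \<bullet> (X *\<^sub>v v))"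

definition diagonal :: "real mat \<Rightarrow> bool" where
  "diagonal D \<longleftrightarrow> (\<forall>i<dim_row D. \<forall>j<dim_col D. i \<noteq> j \<longrightarrow> D $$ (i, j) = 0)"

definition lmax :: "real mat \<Rightarrow> real" where
  "lmax X = Max {k. eigenvalue X k}"

definition hcat :: "real mat \<Rightarrow> real mat \<Rightarrow> real mat" where
  "hcat A B = mat (dim_row A) (dim_col A + dim_col B)
     (\<lambda>(i, j). if j < dim_col A then A $$ (i, j) else B $$ (i, j - dim_col A))"

definition colspace :: "real mat \<Rightarrow> real vec set" where
  "colspace M = {M *\<^sub>v x | x. x \<in> carrier_vec (dim_col M)}"

definition outer :: "real vec \<Rightarrow> real mat" where
  "outer v = mat (dim_vec v) (dim_vec v) (\<lambda>(i, j). v $ i * v $ j)"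

definition Aop :: "nat \<Rightarrow> (nat \<Rightarrow> real mat) \<Rightarrow> real mat \<Rightarrow> real vec" where
  "Aop m A X = vec m (\<lambda>i. frob (A i) X)"

definition Astar :: "nat \<Rightarrow> nat \<Rightarrow> (nat \<Rightarrow> real mat) \<Rightarrow> real vec \<Rightarrow> real mat" where
  "Astar n m A y = mat n n (\<lambda>(i, j). \<Sum>k<m. y $ k * A k $$ (i, j))"

definition Fobj :: "real \<Rightarrow> real mat \<Rightarrow> real mat \<Rightarrow> real" where
  "Fobj \<rho> C X = frob C X + \<rho> * max (lmax (- X)) 0"

definition What :: "real \<Rightarrow> real mat \<Rightarrow> real mat \<Rightarrow> real mat set" where
  "What \<rho> Wb P = {\<gamma> \<cdot>\<^sub>m Wb + P * S * transpose_mat P | \<gamma> S.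
      psd (dim_col P) S \<and> 0 \<le> \<gamma> \<and> \<gamma> + mtrace S \<le> \<rho>}"

definition Fhat :: "real \<Rightarrow> real mat \<Rightarrow> real mat \<Rightarrow> real mat \<Rightarrow> real mat \<Rightarrow> real" where
  "Fhat \<rho> C Wb P X = frob C X + (SUP W \<in> What \<rho> Wb P. frob W (- X))"

end

theory Submission imports Defs "HOL-Analysis.Function_Topology" begin

definition qf :: "nat \<Rightarrow> (nat \<Rightarrow> nat \<Rightarrow> real) \<Rightarrow> (nat \<Rightarrow> real) \<Rightarrow> real" where
  "qf n W v = (\<Sum>i<n. \<Sum>j<n. v i * W i j * v j)"

lemma sphere_max:
  assumes n: "0 < n"
  shows "\<exists>x. (\<Sum>i<n. x i ^ 2) = 1 \<and> (\<forall>y. (\<Sum>i<n. y i ^ 2) = 1 \<longrightarrow> qf n M y \<le> qf n M x)"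
proof -
  let ?T = "product_topology (\<lambda>_. euclideanreal) {..<n}"
  let ?B = "PiE {..<n} (\<lambda>_. {-1..1::real})"
  let ?K = "{x \<in> topspace ?T. (\<Sum>i<n. x i ^ 2) \<in> {1}} \<inter> ?B"
  have cB: "compactin ?T ?B" by (simp add: compactin_PiE)
  have cs: "continuous_map ?T euclideanreal (\<lambda>x. \<Sum>i<n. x i ^ 2)"
    by (intro continuous_intros) auto
  have cq: "continuous_map ?T euclideanreal (qf n M)"
    unfolding qf_def by (intro continuous_intros) auto
  have cl: "closedin ?T {x \<in> topspace ?T. (\<Sum>i<n. x i ^ 2) \<in> {1}}"
    by (rule closedin_continuous_map_preimage[OF cs]) auto
  have cK: "compactin ?T ?K" by (rule closed_Int_compactin[OF cl cB])
  have cpt: "compact (qf n M ` ?K)" using image_compactin[OF cK cq] by simp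
  define e where "e = restrict (\<lambda>i. if i = 0 then 1 else 0::real) {..<n}"
  have esum: "(\<Sum>i<n. e i ^ 2) = (\<Sum>i<n. if i = 0 then 1 else 0)"
    by (rule sum.cong) (auto simp: e_def)
  also have "\<dots> = 1" using n by (simp add: sum.delta)
  finally have e1: "(\<Sum>i<n. e i ^ 2) = 1" .
  have e2: "e \<in> ?B" unfolding e_def by (simp add: restrict_PiE_iff)
  have BT: "z \<in> topspace ?T" if "z \<in> ?B" for z
    unfolding topspace_product_topology topspace_euclidean by (rule subsetD[OF PiE_mono that]) simp
  have Kmem: "z \<in> ?K \<longleftrightarrow> (\<Sum>i<n. z i ^ 2) = 1 \<and> z \<in> ?B" for z
  proof
    assume "z \<in> ?K" thus "(\<Sum>i<n. z i ^ 2) = 1 \<and> z \<in> ?B" by blast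
  next
    assume h: "(\<Sum>i<n. z i ^ 2) = 1 \<and> z \<in> ?B"
    hence "z \<in> topspace ?T" using BT by blast
    thus "z \<in> ?K" using h by blast
  qed
  have he: "e \<in> ?K" by (subst Kmem) (simp add: e1 e2)
  have ne: "qf n M ` ?K \<noteq> {}" using imageI[OF he, of "qf n M"] by (metis empty_iff)
  obtain s where s: "s \<in> qf n M ` ?K" "\<forall>t \<in> qf n M ` ?K. t \<le> s"
    using compact_attains_sup[OF cpt ne] by (elim bexE) (rule that)
  obtain x where x: "x \<in> ?K" "s = qf n M x" using s(1) by (rule imageE) (rule that)
  show ?thesis
  proof (intro exI conjI allI impI)
    show "(\<Sum>i<n. x i ^ 2) = 1" using x(1) by (subst (asm) Kmem) simp
    fix y :: "nat \<Rightarrow> real" assume y: "(\<Sum>i<n. y i ^ 2) = 1"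
    define y' where "y' = restrict y {..<n}"
    have yy: "qf n M y' = qf n M y" unfolding qf_def y'_def by simp
    have bnd: "y i \<in> {-1..1}" if "i < n" for i
    proof -
      have "y i ^ 2 \<le> (\<Sum>i<n. y i ^ 2)"
        by (rule member_le_sum) (use that in auto)
      hence "\<bar>y i\<bar> \<le> 1" using y by (simp add: abs_square_le_1)
      thus ?thesis by (simp add: abs_le_iff)
    qed
    have y1: "(\<Sum>i<n. y' i ^ 2) = 1" using y unfolding y'_def by simp
    have y2: "y' \<in> ?B" unfolding y'_def using bnd by (simp add: restrict_PiE_iff)
    have "y' \<in> ?K" by (subst Kmem) (simp add: y1 y2)
    hence "qf n M y' \<le> s" by (rule bspec[OF s(2) imageI])
    thus "qf n M y \<le> qf n M x" using x(2) yy by simp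
  qed
qed

lemma quad_zero:
  fixes a b :: real
  assumes h: "\<forall>t. a * t + b * t^2 \<le> 0"
  shows "a = 0"
proof (rule ccontr)
  assume a: "a \<noteq> 0"
  define c where "c = \<bar>b\<bar> + 1"
  have c: "c > 0" unfolding c_def by simp
  define t where "t = a / (2 * c)"
  have "a * t + b * t^2 = a^2 * (2 * c + b) / (4 * c^2)"
    unfolding t_def using c by (simp add: power2_eq_square field_simps)
  moreover have "2 * c + b > 0" unfolding c_def by (cases "b \<ge> 0") auto
  ultimately have "a * t + b * t^2 > 0" using a c by simp
  thus False using h by (meson not_less)
qed

lemma qf_expand:
  "qf n M (\<lambda>i. x i + t * w i) = qf n M x + t * ((\<Sum>i<n. \<Sum>j<n. x i * M i j * w j) + (\<Sum>i<n. \<Sum>j<n. w i * M i j * x j)) + t^2 * qf n M w"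
  unfolding qf_def by (simp add: algebra_simps power2_eq_square sum.distrib sum_distrib_left)

lemma sumsq_expand:
  fixes x w :: "nat \<Rightarrow> real"
  shows "(\<Sum>i<n. (x i + t * w i)^2) = (\<Sum>i<n. x i^2) + t * (2 * (\<Sum>i<n. x i * w i)) + t^2 * (\<Sum>i<n. w i^2)"
  by (simp add: algebra_simps power2_eq_square sum.distrib sum_distrib_left)

lemma rayleigh:
  assumes sym: "\<forall>i<n. \<forall>j<n. M i j = M j i" and n: "0 < n"
  shows "\<exists>x lam. (\<Sum>i<n. x i ^ 2) = 1 \<and> (\<forall>i<n. (\<Sum>j<n. M i j * x j) = lam * x i)
     \<and> (\<forall>y. qf n M y \<le> lam * (\<Sum>i<n. y i ^ 2))"
proof -
  obtain x where x1: "(\<Sum>i<n. x i ^ 2) = 1" and xm: "\<forall>y. (\<Sum>i<n. y i ^ 2) = 1 \<longrightarrow> qf n M y \<le> qf n M x"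
    using sphere_max[OF n] by blast
  define lam where "lam = qf n M x"
  have bound: "qf n M y \<le> lam * (\<Sum>i<n. y i ^ 2)" for y
  proof (cases "(\<Sum>i<n. y i ^ 2) = 0")
    case True
    hence "\<forall>i\<in>{..<n}. y i ^ 2 = 0" by (subst sum_nonneg_eq_0_iff[symmetric]) auto
    hence "qf n M y = 0" unfolding qf_def by simp
    thus ?thesis using True by simp
  next
    case False
    define s2 where "s2 = (\<Sum>i<n. y i ^ 2)"
    have s2p: "s2 > 0" using False unfolding s2_def by (metis (no_types, lifting) order_le_less sum_nonneg zero_le_power2)
    define s where "s = sqrt s2"
    have sp: "s > 0" using s2p unfolding s_def by simp
    have ss: "s^2 = s2" using s2p unfolding s_def by simp
    have "(\<Sum>i<n. (y i / s) ^ 2) = s2 / s^2" unfolding s2_def by (simp add: power_divide sum_divide_distrib)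
    also have "\<dots> = 1" using ss s2p by simp
    finally have "qf n M (\<lambda>i. y i / s) \<le> qf n M x" by (rule xm[rule_format])
    hence "qf n M (\<lambda>i. y i / s) \<le> lam" unfolding lam_def .
    moreover have "qf n M (\<lambda>i. y i / s) = qf n M y / s^2"
      unfolding qf_def by (simp add: sum_divide_distrib power2_eq_square)
    ultimately have "qf n M y / s^2 \<le> lam" by simp
    hence "qf n M y \<le> lam * s^2" using sp by (simp add: divide_le_eq)
    thus ?thesis using ss unfolding s2_def by simp
  qed
  have eig: "(\<Sum>j<n. M k j * x j) = lam * x k" if k: "k < n" for k
  proof -
    define w where "w = (\<lambda>i. if i = k then 1 else (0::real))"
    define B where "B = (\<Sum>i<n. \<Sum>j<n. x i * M i j * w j)"
    have B2: "(\<Sum>i<n. \<Sum>j<n. w i * M i j * x j) = B"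
      unfolding B_def by (subst sum.swap) (auto intro!: sum.cong simp: sym)
    have "\<forall>t. (2 * B - 2 * lam * (\<Sum>i<n. x i * w i)) * t + (qf n M w - lam * (\<Sum>i<n. w i^2)) * t^2 \<le> 0"
    proof
      fix t :: real
      have "qf n M (\<lambda>i. x i + t * w i) \<le> lam * (\<Sum>i<n. (x i + t * w i)^2)" by (rule bound)
      thus "(2 * B - 2 * lam * (\<Sum>i<n. x i * w i)) * t + (qf n M w - lam * (\<Sum>i<n. w i^2)) * t^2 \<le> 0"
        unfolding qf_expand sumsq_expand B2 using x1 unfolding lam_def[symmetric] B_def[symmetric]
        by (simp add: algebra_simps)
    qed
    hence "2 * B - 2 * lam * (\<Sum>i<n. x i * w i) = 0" by (rule quad_zero)
    moreover have "(\<Sum>i<n. x i * w i) = x k" unfolding w_def using k by (simp add: sum.delta if_distrib cong: if_cong)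
    moreover have "B = (\<Sum>j<n. M k j * x j)" unfolding B_def w_def using k
      by (simp add: if_distrib sum.delta cong: if_cong) (auto intro!: sum.cong simp: sym)
    ultimately show ?thesis by simp
  qed
  show ?thesis using x1 eig bound by blast
qed

lemma lin_zero:
  fixes a c :: real
  assumes h: "\<forall>t. 0 \<le> c + a * t"
  shows "a = 0"
proof (rule ccontr)
  assume a: "a \<noteq> 0"
  have "0 \<le> c + a * (- (\<bar>c\<bar> + 1) / a)" using h by blast
  also have "c + a * (- (\<bar>c\<bar> + 1) / a) = c - \<bar>c\<bar> - 1" using a by (simp add: field_simps)
  finally show False by (cases "c \<ge> 0") auto
qed

definition ev :: "nat \<Rightarrow> nat \<Rightarrow> real" where "ev k = (\<lambda>i. if i = k then 1 else 0)"

lemma sum_ev: "k < n \<Longrightarrow> (\<Sum>i<n. ev k i * g i) = g k"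
proof -
  assume k: "k < n"
  have "(\<Sum>i<n. ev k i * g i) = (\<Sum>i<n. if i = k then g i else 0)"
    by (rule sum.cong) (simp_all add: ev_def)
  also have "\<dots> = g k" using k by (simp add: sum.delta)
  finally show ?thesis .
qed

lemma sum_ev_r: "k < n \<Longrightarrow> (\<Sum>i<n. g i * ev k i) = g k"
  using sum_ev[of k n g] by (simp add: mult.commute)

lemma bl_e_left: "k < n \<Longrightarrow> (\<Sum>i<n. \<Sum>j<n. ev k i * W i j * f j) = (\<Sum>j<n. W k j * f j)"
proof -
  assume k: "k < n"
  have "(\<Sum>i<n. \<Sum>j<n. ev k i * W i j * f j) = (\<Sum>i<n. ev k i * (\<Sum>j<n. W i j * f j))"
    by (simp add: sum_distrib_left mult.assoc)
  also have "\<dots> = (\<Sum>j<n. W k j * f j)" by (rule sum_ev[OF k])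
  finally show ?thesis .
qed

lemma bl_e_right: "k < n \<Longrightarrow> (\<Sum>i<n. \<Sum>j<n. f i * W i j * ev k j) = (\<Sum>i<n. f i * W i k)"
  by (simp add: sum_ev_r)

lemma qf_ev: "k < n \<Longrightarrow> qf n W (ev k) = W k k"
  unfolding qf_def by (simp add: bl_e_left sum_ev_r sum_ev)

lemma psd_zero_row:
  assumes psd: "\<forall>v. 0 \<le> qf n W v" and sym: "\<forall>i<n. \<forall>j<n. W i j = W j i"
    and k: "k < n" and j: "j < n" and z: "W k k = 0"
  shows "W k j = 0"
proof -
  have "\<forall>t. 0 \<le> W j j + (2 * W k j) * t"
  proof
    fix t :: real
    have "0 \<le> qf n W (\<lambda>i. ev j i + t * ev k i)" using psd by blast
    also have "\<dots> = W j j + (2 * W k j) * t"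
      unfolding qf_expand qf_ev[OF j] qf_ev[OF k] bl_e_left[OF j] bl_e_right[OF j] z
      using k j sym by (simp add: sum_ev_r sum_ev)
    finally show "0 \<le> W j j + (2 * W k j) * t" .
  qed
  from lin_zero[OF this] show ?thesis by simp
qed

lemma chol_aux:
  "\<forall>W. (\<forall>i<n. \<forall>j<n. W i j = W j i) \<and> (\<forall>v. 0 \<le> qf n W v)
     \<and> (\<forall>i<n. \<forall>j<n. (i < n - d \<or> j < n - d) \<longrightarrow> W i j = 0)
   \<longrightarrow> (\<exists>(L::nat) c. \<forall>i<n. \<forall>j<n. W i j = (\<Sum>l<L. c l i * c l j))"
proof (induction d)
  case 0
  show ?case
  proof (intro allI impI)
    fix W :: "nat \<Rightarrow> nat \<Rightarrow> real"
    assume "(\<forall>i<n. \<forall>j<n. W i j = W j i) \<and> (\<forall>v. 0 \<le> qf n W v) \<and> (\<forall>i<n. \<forall>j<n. (i < n - 0 \<or> j < n - 0) \<longrightarrow> W i j = 0)"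
    hence Z: "\<forall>i<n. \<forall>j<n. W i j = 0" by simp
    show "\<exists>(L::nat) c. \<forall>i<n. \<forall>j<n. W i j = (\<Sum>l<L. c l i * c l j)" by (rule exI[where x="0::nat"], rule exI[where x="\<lambda>_ _. 0::real"]) (simp add: Z)
  qed
next
  case (Suc d)
  show ?case
  proof (intro allI impI)
    fix W :: "nat \<Rightarrow> nat \<Rightarrow> real"
    assume H: "(\<forall>i<n. \<forall>j<n. W i j = W j i) \<and> (\<forall>v. 0 \<le> qf n W v) \<and> (\<forall>i<n. \<forall>j<n. (i < n - Suc d \<or> j < n - Suc d) \<longrightarrow> W i j = 0)"
    have sym: "\<forall>i<n. \<forall>j<n. W i j = W j i" using H by (rule conjunct1)
    have psd: "\<forall>v. 0 \<le> qf n W v" using H by (blast dest: conjunct2 conjunct1)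
    have zer: "\<forall>i<n. \<forall>j<n. (i < n - Suc d \<or> j < n - Suc d) \<longrightarrow> W i j = 0" using H by (blast dest: conjunct2)
    show "\<exists>(L::nat) c. \<forall>i<n. \<forall>j<n. W i j = (\<Sum>l<L. c l i * c l j)"
    proof (cases "d < n")
      case False
      hence "n - Suc d = n - d" by simp
      hence "\<forall>i<n. \<forall>j<n. (i < n - d \<or> j < n - d) \<longrightarrow> W i j = 0" using zer by simp
      thus ?thesis using Suc.IH sym psd by blast
    next
      case True
      define k where "k = n - Suc d"
      have k: "k < n" and nd: "n - d = Suc k" using True unfolding k_def by auto
      have zk: "\<forall>i<n. \<forall>j<n. (i < k \<or> j < k) \<longrightarrow> W i j = 0" using zer unfolding k_def .
      show ?thesis
      proof (cases "W k k = 0")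
        case True
        have row: "W k j = 0" if "j < n" for j using psd_zero_row[OF psd sym k that True] .
        have "\<forall>i<n. \<forall>j<n. (i < n - d \<or> j < n - d) \<longrightarrow> W i j = 0"
        proof (intro allI impI)
          fix i j assume ij: "i < n" "j < n" "i < n - d \<or> j < n - d"
          show "W i j = 0"
          proof (cases "i = k \<or> j = k")
            case True
            show ?thesis
            proof (cases "i = k")
              case True thus ?thesis using row ij(2) by simp
            next
              case False hence jk: "j = k" using \<open>i = k \<or> j = k\<close> by simp
              have "W i k = W k i" using sym ij(1) k by blast
              thus ?thesis using row[OF ij(1)] jk by simp
            qed
          next
            case False thus ?thesis using zk ij nd by auto
          qed
        qed
        thus ?thesis using Suc.IH sym psd by blast
      next
        case False
        have pge: "0 \<le> W k k" using spec[OF psd, of "ev k"] qf_ev[OF k, of W] by simp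
        define p where "p = W k k"
        have p: "p > 0" using pge False unfolding p_def by simp
        define W' where "W' = (\<lambda>i j. W i j - W i k * W k j / p)"
        have sym': "\<forall>i<n. \<forall>j<n. W' i j = W' j i"
        proof (intro allI impI)
          fix i j assume ij: "i < n" "j < n"
          have "W i j = W j i" "W i k = W k i" "W j k = W k j" using sym k ij by blast+
          thus "W' i j = W' j i" unfolding W'_def by (simp add: mult.commute)
        qed
        have psd': "\<forall>v. 0 \<le> qf n W' v"
        proof
          fix v
          define c where "c = (\<Sum>j<n. W k j * v j)"
          have c2: "(\<Sum>i<n. v i * W i k) = c" unfolding c_def
          proof (rule sum.cong[OF refl])
            fix i assume "i \<in> {..<n}"
            hence "W i k = W k i" using sym k by blast
            thus "v i * W i k = W k i * v i" by simp
          qed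
          define s where "s = - c / p"
          have "0 \<le> qf n W (\<lambda>i. v i + s * ev k i)" using psd by blast
          also have "\<dots> = qf n W v + s * (c + c) + s^2 * p"
            unfolding qf_expand bl_e_left[OF k] bl_e_right[OF k] qf_ev[OF k] c2 c_def[symmetric] p_def ..
          also have "\<dots> = qf n W v - c^2 / p" unfolding s_def using p by (simp add: power2_eq_square field_simps)
          also have "\<dots> = qf n W' v"
          proof -
            have "qf n W' v = qf n W v - (\<Sum>i<n. \<Sum>j<n. v i * (W i k * W k j / p) * v j)"
              unfolding qf_def W'_def by (simp add: algebra_simps sum_subtractf)
            also have "(\<Sum>i<n. \<Sum>j<n. v i * (W i k * W k j / p) * v j) = (\<Sum>i<n. (v i * W i k) * (\<Sum>j<n. W k j * v j) / p)"
              by (rule sum.cong[OF refl]) (simp add: sum_distrib_left sum_divide_distrib algebra_simps)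
            also have "\<dots> = (\<Sum>i<n. v i * W i k) * (\<Sum>j<n. W k j * v j) / p"
              by (simp add: sum_distrib_right sum_divide_distrib)
            finally show ?thesis unfolding c2 c_def[symmetric] by (simp add: power2_eq_square)
          qed
          finally show "0 \<le> qf n W' v" .
        qed
        have zer': "\<forall>i<n. \<forall>j<n. (i < n - d \<or> j < n - d) \<longrightarrow> W' i j = 0"
        proof (intro allI impI)
          fix i j assume ij: "i < n" "j < n" "i < n - d \<or> j < n - d"
          show "W' i j = 0"
          proof (cases "i = k \<or> j = k")
            case True
            thus ?thesis unfolding W'_def using p p_def sym ij k by (auto simp: field_simps)
          next
            case False
            hence "i < k \<or> j < k" using ij nd by auto
            thus ?thesis unfolding W'_def using zk ij k by auto
          qed
        qed
        have "\<exists>(L::nat) c. \<forall>i<n. \<forall>j<n. W' i j = (\<Sum>l<L. c l i * c l j)"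
          using Suc.IH sym' psd' zer' by blast
        then obtain L :: nat and c :: "nat \<Rightarrow> nat \<Rightarrow> real" where Lc: "\<forall>i<n. \<forall>j<n. W' i j = (\<Sum>l<L. c l i * c l j)"
          by blast
        define c' where "c' = c(L := (\<lambda>i. W i k / sqrt p))"
        have "\<forall>i<n. \<forall>j<n. W i j = (\<Sum>l<Suc L. c' l i * c' l j)"
        proof (intro allI impI)
          fix i j assume ij: "i < n" "j < n"
          have "(\<Sum>l<Suc L. c' l i * c' l j) = (\<Sum>l<L. c l i * c l j) + W i k / sqrt p * (W j k / sqrt p)"
            unfolding c'_def by simp
          also have "\<dots> = W' i j + W i k * W k j / p"
            using Lc ij sym k p by (simp add: power2_eq_square[symmetric] real_sqrt_pow2 field_simps)
          also have "\<dots> = W i j" unfolding W'_def by simp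
          finally show "W i j = (\<Sum>l<Suc L. c' l i * c' l j)" by simp
        qed
        thus ?thesis by (intro exI)
      qed
    qed
  qed
qed

lemma chol:
  assumes "\<forall>i<n. \<forall>j<n. W i j = W j i" "\<forall>v. 0 \<le> qf n W v"
  shows "\<exists>(L::nat) c. \<forall>i<n. \<forall>j<n. W i j = (\<Sum>l<L. c l i * c l j)"
  using chol_aux[of n n] assms by auto

definition fm :: "real mat \<Rightarrow> nat \<Rightarrow> nat \<Rightarrow> real" where "fm M = (\<lambda>i j. M $$ (i,j))"

lemma row_scalar: "A \<in> carrier_mat a b \<Longrightarrow> i < a \<Longrightarrow> v \<in> carrier_vec b \<Longrightarrow>
   row A i \<bullet> v = (\<Sum>j<b. A $$ (i,j) * v $ j)"
  unfolding scalar_prod_def by (auto simp: atLeast0LessThan intro!: sum.cong)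

lemma frob_sum: assumes "A \<in> carrier_mat a b" "B \<in> carrier_mat b a"
  shows "frob A B = (\<Sum>i<a. \<Sum>j<b. A $$ (i,j) * B $$ (j,i))"
  unfolding frob_def mtrace_def using assms
  by (auto simp: scalar_prod_def atLeast0LessThan intro!: sum.cong)

lemma mtrace_sum: "A \<in> carrier_mat n n \<Longrightarrow> mtrace A = (\<Sum>i<n. A $$ (i,i))"
  unfolding mtrace_def by simp

lemma frob_comm: assumes "A \<in> carrier_mat a b" "B \<in> carrier_mat b a"
  shows "frob A B = frob B A"
  unfolding frob_sum[OF assms] frob_sum[OF assms(2,1)]
  by (subst sum.swap) (simp add: mult.commute)

lemma qf_vec: assumes M: "M \<in> carrier_mat n n" and v: "v \<in> carrier_vec n"
  shows "v \<bullet> (M *\<^sub>v v) = qf n (fm M) (\<lambda>i. v $ i)"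
proof -
  have "v \<bullet> (M *\<^sub>v v) = (\<Sum>i<n. v $ i * (M *\<^sub>v v) $ i)"
    unfolding scalar_prod_def using M by (simp add: atLeast0LessThan)
  also have "\<dots> = (\<Sum>i<n. v $ i * (\<Sum>j<n. M $$ (i,j) * v $ j))"
    using M v by (auto intro!: sum.cong simp: row_scalar)
  also have "\<dots> = qf n (fm M) (\<lambda>i. v $ i)"
    unfolding qf_def fm_def by (simp add: sum_distrib_left mult.assoc)
  finally show ?thesis .
qed

lemma qf_cong: "(\<And>i. i < n \<Longrightarrow> x i = y i) \<Longrightarrow> qf n W x = qf n W y"
  unfolding qf_def by (auto intro!: sum.cong)

lemma psd_qf: assumes "psd n W" shows "0 \<le> qf n (fm W) x"
proof -
  have W: "W \<in> carrier_mat n n" using assms unfolding psd_def symm_def by auto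
  have "0 \<le> vec n x \<bullet> (W *\<^sub>v vec n x)" using assms unfolding psd_def by auto
  also have "\<dots> = qf n (fm W) (\<lambda>i. vec n x $ i)" by (rule qf_vec[OF W]) simp
  also have "\<dots> = qf n (fm W) x" by (rule qf_cong) simp
  finally show ?thesis .
qed

lemma symm_fm: "symm n M \<Longrightarrow> \<forall>i<n. \<forall>j<n. fm M i j = fm M j i"
  unfolding symm_def fm_def by (metis index_transpose_mat(1) carrier_matD)

lemma eig_finite: fixes M :: "real mat" assumes M: "M \<in> carrier_mat n n" shows "finite {k. eigenvalue M k}"
proof -
  have "char_poly M \<noteq> 0" using degree_monic_char_poly[OF M] by auto
  hence "finite {k. poly (char_poly M) k = 0}" using poly_roots_finite[of "char_poly M"] by simp
  thus ?thesis using eigenvalue_root_char_poly[OF M] by simp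
qed

lemma lmax_props:
  assumes sM: "symm n M" and n: "0 < n"
  shows "eigenvalue M (lmax M)" "\<forall>x. qf n (fm M) x \<le> lmax M * (\<Sum>i<n. x i ^ 2)"
proof -
  have M: "M \<in> carrier_mat n n" using sM unfolding symm_def by auto
  obtain x lam where x1: "(\<Sum>i<n. x i ^ 2) = 1" and xe: "\<forall>i<n. (\<Sum>j<n. fm M i j * x j) = lam * x i"
     and xb: "\<forall>y. qf n (fm M) y \<le> lam * (\<Sum>i<n. y i ^ 2)"
    using rayleigh[OF symm_fm[OF sM] n] by blast
  have ev: "eigenvalue M lam"
  proof -
    have "M *\<^sub>v vec n x = lam \<cdot>\<^sub>v vec n x"
      using M xe by (intro eq_vecI) (auto simp: row_scalar fm_def)
    moreover have "vec n x \<noteq> 0\<^sub>v n"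
    proof
      assume "vec n x = 0\<^sub>v n"
      hence "\<forall>i<n. x i = 0" by (metis index_vec index_zero_vec(1))
      hence "(\<Sum>i<n. x i ^ 2) = 0" by simp
      thus False using x1 by simp
    qed
    ultimately have "eigenvector M (vec n x) lam" unfolding eigenvector_def using M by auto
    thus ?thesis unfolding eigenvalue_def by blast
  qed
  have fin: "finite {k. eigenvalue M k}" by (rule eig_finite[OF M])
  have "lmax M \<in> {k. eigenvalue M k}" unfolding lmax_def using fin ev by (intro Max_in) auto
  thus "eigenvalue M (lmax M)" by simp
  have le: "lam \<le> lmax M" unfolding lmax_def using fin ev by (intro Max_ge) auto
  show "\<forall>x. qf n (fm M) x \<le> lmax M * (\<Sum>i<n. x i ^ 2)"
  proof
    fix y
    have "qf n (fm M) y \<le> lam * (\<Sum>i<n. y i ^ 2)" using xb by blast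
    also have "\<dots> \<le> lmax M * (\<Sum>i<n. y i ^ 2)" using le by (intro mult_right_mono) (auto intro: sum_nonneg)
    finally show "qf n (fm M) y \<le> lmax M * (\<Sum>i<n. y i ^ 2)" .
  qed
qed

lemma trace_bound:
  assumes W: "psd n W" and sM: "symm n M" and n: "0 < n"
  shows "frob W M \<le> mtrace W * lmax M"
proof -
  have Wc: "W \<in> carrier_mat n n" and Mc: "M \<in> carrier_mat n n" using W sM unfolding psd_def symm_def by auto
  obtain L :: nat and c where c: "\<forall>i<n. \<forall>j<n. fm W i j = (\<Sum>l<L. c l i * c l j)"
    using chol[OF symm_fm allI[OF psd_qf[OF W]]] W unfolding psd_def by blast
  have symM: "\<forall>i<n. \<forall>j<n. fm M i j = fm M j i" by (rule symm_fm[OF sM])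
  have "frob W M = (\<Sum>i<n. \<Sum>j<n. fm W i j * fm M j i)" unfolding frob_sum[OF Wc Mc] fm_def ..
  also have "\<dots> = (\<Sum>i<n. \<Sum>j<n. \<Sum>l<L. c l i * fm M i j * c l j)"
    using c symM by (auto intro!: sum.cong simp: sum_distrib_right sum_distrib_left mult.commute mult.left_commute)
  also have "\<dots> = (\<Sum>i<n. \<Sum>l<L. \<Sum>j<n. c l i * fm M i j * c l j)"
    by (rule sum.cong[OF refl]) (rule sum.swap)
  also have "\<dots> = (\<Sum>l<L. \<Sum>i<n. \<Sum>j<n. c l i * fm M i j * c l j)"
    by (rule sum.swap)
  also have "\<dots> = (\<Sum>l<L. qf n (fm M) (c l))" unfolding qf_def ..
  also have "\<dots> \<le> (\<Sum>l<L. lmax M * (\<Sum>i<n. c l i ^ 2))"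
    using lmax_props(2)[OF sM n] by (intro sum_mono) blast
  also have "\<dots> = lmax M * (\<Sum>i<n. \<Sum>l<L. c l i * c l i)"
    by (simp add: sum_distrib_left power2_eq_square) (rule sum.swap)
  also have "(\<Sum>i<n. \<Sum>l<L. c l i * c l i) = mtrace W"
    unfolding mtrace_sum[OF Wc] using c by (auto intro!: sum.cong simp: fm_def)
  finally show ?thesis by (simp add: mult.commute)
qed

lemma frob_add_left: "A \<in> carrier_mat n n \<Longrightarrow> B \<in> carrier_mat n n \<Longrightarrow> Y \<in> carrier_mat n n \<Longrightarrow>
  frob (A + B) Y = frob A Y + frob B Y"
  by (simp add: frob_sum[of _ n n] algebra_simps sum.distrib)

lemma frob_minus_left: "A \<in> carrier_mat n n \<Longrightarrow> B \<in> carrier_mat n n \<Longrightarrow> Y \<in> carrier_mat n n \<Longrightarrow>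
  frob (A - B) Y = frob A Y - frob B Y"
  by (subst frob_sum[of "A - B" n n]) (auto simp: frob_sum[of _ n n] algebra_simps sum_subtractf)

lemma frob_smult_left: "A \<in> carrier_mat n n \<Longrightarrow> Y \<in> carrier_mat n n \<Longrightarrow>
  frob (c \<cdot>\<^sub>m A) Y = c * frob A Y"
  by (simp add: frob_sum[of _ n n] algebra_simps sum_distrib_left)

lemma frob_add_right: "A \<in> carrier_mat n n \<Longrightarrow> Y \<in> carrier_mat n n \<Longrightarrow> Z \<in> carrier_mat n n \<Longrightarrow>
  frob A (Y + Z) = frob A Y + frob A Z"
  by (simp add: frob_sum[of _ n n] algebra_simps sum.distrib)

lemma frob_minus_right: "A \<in> carrier_mat n n \<Longrightarrow> Y \<in> carrier_mat n n \<Longrightarrow> Z \<in> carrier_mat n n \<Longrightarrow>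
  frob A (Y - Z) = frob A Y - frob A Z"
  by (subst frob_sum[of A n n "Y - Z"]) (auto simp: frob_sum[of _ n n] algebra_simps sum_subtractf)

lemma frob_smult_right: "A \<in> carrier_mat n n \<Longrightarrow> Y \<in> carrier_mat n n \<Longrightarrow>
  frob A (c \<cdot>\<^sub>m Y) = c * frob A Y"
  by (simp add: frob_sum[of _ n n] algebra_simps sum_distrib_left)

lemma frob_uminus_right: "A \<in> carrier_mat n n \<Longrightarrow> Y \<in> carrier_mat n n \<Longrightarrow>
  frob A (- Y) = - frob A Y"
  by (simp add: frob_sum[of _ n n] sum_negf)

lemma frob_zero_left: "Y \<in> carrier_mat n n \<Longrightarrow> frob (0\<^sub>m n n) Y = 0"
  by (simp add: frob_sum[of _ n n])

lemma outer_carrier[simp]: "v \<in> carrier_vec n \<Longrightarrow> outer v \<in> carrier_mat n n"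
  unfolding outer_def by auto

lemma frob_outer: assumes v: "v \<in> carrier_vec n" and M: "M \<in> carrier_mat n n"
  shows "frob (outer v) M = v \<bullet> (M *\<^sub>v v)"
proof -
  have "frob (outer v) M = (\<Sum>i<n. \<Sum>j<n. v $ i * v $ j * M $$ (j,i))"
    unfolding frob_sum[OF outer_carrier[OF v] M] using v by (auto simp: outer_def intro!: sum.cong)
  also have "\<dots> = qf n (fm M) (\<lambda>i. v $ i)" unfolding qf_def fm_def
    by (subst sum.swap) (simp add: mult.commute mult.left_commute)
  also have "\<dots> = v \<bullet> (M *\<^sub>v v)" using qf_vec[OF M v] by simp
  finally show ?thesis .
qed

lemma psd_carrier: "psd n A \<Longrightarrow> A \<in> carrier_mat n n" unfolding psd_def symm_def by auto

lemma psd_add: assumes A: "psd n A" and B: "psd n B" shows "psd n (A + B)"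
proof -
  have Ac: "A \<in> carrier_mat n n" and Bc: "B \<in> carrier_mat n n" using A B psd_carrier by auto
  have "transpose_mat (A + B) = A + B" using A B Ac Bc unfolding psd_def symm_def by (simp add: transpose_add)
  moreover have "0 \<le> v \<bullet> ((A + B) *\<^sub>v v)" if v: "v \<in> carrier_vec n" for v
  proof -
    have "(A + B) *\<^sub>v v = A *\<^sub>v v + B *\<^sub>v v" using Ac Bc v by (rule add_mult_distrib_mat_vec)
    hence "v \<bullet> ((A + B) *\<^sub>v v) = v \<bullet> (A *\<^sub>v v) + v \<bullet> (B *\<^sub>v v)"
      using Ac Bc v by (simp add: scalar_prod_add_distrib[of _ n])
    thus ?thesis using A B v unfolding psd_def by auto
  qed
  ultimately show ?thesis unfolding psd_def symm_def using Ac Bc by auto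
qed

lemma psd_smult: assumes A: "psd n A" and c: "0 \<le> c" shows "psd n (c \<cdot>\<^sub>m A)"
proof -
  have Ac: "A \<in> carrier_mat n n" using A psd_carrier by auto
  have At: "transpose_mat A = A" using A unfolding psd_def symm_def by auto
  have "transpose_mat (c \<cdot>\<^sub>m A) = c \<cdot>\<^sub>m transpose_mat A" by (rule eq_matI) auto
  hence "transpose_mat (c \<cdot>\<^sub>m A) = c \<cdot>\<^sub>m A" using At by simp
  moreover have "0 \<le> v \<bullet> ((c \<cdot>\<^sub>m A) *\<^sub>v v)" if v: "v \<in> carrier_vec n" for v
  proof -
    have "(c \<cdot>\<^sub>m A) *\<^sub>v v = c \<cdot>\<^sub>v (A *\<^sub>v v)" using Ac v by (intro eq_vecI) (auto simp: scalar_prod_def sum_distrib_left mult.assoc)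
    hence "v \<bullet> ((c \<cdot>\<^sub>m A) *\<^sub>v v) = c * (v \<bullet> (A *\<^sub>v v))" using Ac v by simp
    thus ?thesis using A v c unfolding psd_def by auto
  qed
  ultimately show ?thesis unfolding psd_def symm_def using Ac by auto
qed

lemma psd_BSBt: assumes S: "psd k S" and B: "B \<in> carrier_mat n k"
  shows "psd n (B * S * transpose_mat B)"
proof -
  have Sc: "S \<in> carrier_mat k k" using S psd_carrier by auto
  have St: "transpose_mat S = S" using S unfolding psd_def symm_def by auto
  have c: "B * S * transpose_mat B \<in> carrier_mat n n" using B Sc by auto
  have "transpose_mat (B * S * transpose_mat B) = transpose_mat (transpose_mat B) * transpose_mat (B * S)"
    using B Sc by (intro transpose_mult) auto
  also have "\<dots> = B * (transpose_mat S * transpose_mat B)" using B Sc by (simp add: transpose_mult)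
  also have "\<dots> = B * S * transpose_mat B" using B Sc St by simp
  finally have t: "transpose_mat (B * S * transpose_mat B) = B * S * transpose_mat B" .
  have "0 \<le> v \<bullet> ((B * S * transpose_mat B) *\<^sub>v v)" if v: "v \<in> carrier_vec n" for v
  proof -
    define w where "w = transpose_mat B *\<^sub>v v"
    have w: "w \<in> carrier_vec k" unfolding w_def using B v by auto
    have BS: "B * S \<in> carrier_mat n k" using B Sc by simp
    have Bt: "transpose_mat B \<in> carrier_mat k n" using B by simp
    have "(B * S * transpose_mat B) *\<^sub>v v = (B * S) *\<^sub>v w" unfolding w_def
      by (rule assoc_mult_mat_vec[OF BS Bt v])
    also have "\<dots> = B *\<^sub>v (S *\<^sub>v w)" by (rule assoc_mult_mat_vec[OF B Sc w])
    finally have e1: "(B * S * transpose_mat B) *\<^sub>v v = B *\<^sub>v (S *\<^sub>v w)" .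
    have Sw: "S *\<^sub>v w \<in> carrier_vec k" using Sc w by simp
    have "v \<bullet> (B *\<^sub>v (S *\<^sub>v w)) = w \<bullet> (S *\<^sub>v w)"
      unfolding w_def using transpose_vec_mult_scalar[OF B Sw v] by (simp add: w_def)
    hence "v \<bullet> ((B * S * transpose_mat B) *\<^sub>v v) = w \<bullet> (S *\<^sub>v w)" using e1 by simp
    thus ?thesis using S w unfolding psd_def by auto
  qed
  thus ?thesis unfolding psd_def symm_def using c t by auto
qed

lemma psd_trace_nonneg: assumes "psd n W" shows "0 \<le> mtrace W"
proof -
  have Wc: "W \<in> carrier_mat n n" using assms psd_carrier by auto
  have "0 \<le> W $$ (i,i)" if "i < n" for i
    using psd_qf[OF assms, of "ev i"] qf_ev[OF that] by (simp add: fm_def)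
  thus ?thesis unfolding mtrace_sum[OF Wc] by (intro sum_nonneg) auto
qed

lemma mtrace_add: "A \<in> carrier_mat n n \<Longrightarrow> B \<in> carrier_mat n n \<Longrightarrow> mtrace (A + B) = mtrace A + mtrace B"
  unfolding mtrace_def by (simp add: sum.distrib)

lemma mtrace_smult: "A \<in> carrier_mat n n \<Longrightarrow> mtrace (c \<cdot>\<^sub>m A) = c * mtrace A"
  unfolding mtrace_def by (simp add: sum_distrib_left)

lemma mtrace_BSBt: assumes B: "B \<in> carrier_mat n k" and BB: "transpose_mat B * B = 1\<^sub>m k"
  and S: "S \<in> carrier_mat k k"
  shows "mtrace (B * S * transpose_mat B) = mtrace S"
proof -
  have "mtrace (B * S * transpose_mat B) = frob (B * S) (transpose_mat B)" unfolding frob_def ..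
  also have "\<dots> = frob (transpose_mat B) (B * S)" using B S by (intro frob_comm) auto
  also have "\<dots> = mtrace ((transpose_mat B * B) * S)" unfolding frob_def using B S by simp
  also have "\<dots> = mtrace S" using BB S by simp
  finally show ?thesis .
qed

lemma What_props:
  assumes Wb: "psd n Wb" "mtrace Wb = 1" and P: "P \<in> carrier_mat n k" "transpose_mat P * P = 1\<^sub>m k"
    and W: "W \<in> What \<rho> Wb P"
  shows "psd n W" "mtrace W \<le> \<rho>"
proof -
  obtain \<gamma> S where W: "W = \<gamma> \<cdot>\<^sub>m Wb + P * S * transpose_mat P" and S: "psd (dim_col P) S"
     and g: "0 \<le> \<gamma>" "\<gamma> + mtrace S \<le> \<rho>" using W unfolding What_def by blast
  have dk: "dim_col P = k" using P by auto
  have S': "psd k S" using S dk by simp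
  have Sc: "S \<in> carrier_mat k k" using S' psd_carrier by auto
  have Wbc: "Wb \<in> carrier_mat n n" using Wb psd_carrier by auto
  show "psd n W" unfolding W by (intro psd_add psd_smult Wb(1) g(1) psd_BSBt[OF S' P(1)])
  have t1: "mtrace (P * S * transpose_mat P) = mtrace S" by (rule mtrace_BSBt[OF P Sc])
  have "mtrace W = mtrace (\<gamma> \<cdot>\<^sub>m Wb) + mtrace (P * S * transpose_mat P)"
    unfolding W by (rule mtrace_add[of _ n]) (use P Sc Wbc in auto)
  also have "\<dots> = \<gamma> * mtrace Wb + mtrace S" using t1 mtrace_smult[OF Wbc] by simp
  finally have "mtrace W = \<gamma> * mtrace Wb + mtrace S" .
  thus "mtrace W \<le> \<rho>" using Wb(2) g by simp
qed

lemma zero_in_What: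
  assumes Wb: "Wb \<in> carrier_mat n n" and P: "P \<in> carrier_mat n k" and rho: "0 \<le> \<rho>"
  shows "0\<^sub>m n n \<in> What \<rho> Wb P"
proof -
  have z: "0\<^sub>m k k *\<^sub>v v = 0\<^sub>v k" if "v \<in> carrier_vec k" for v :: "real vec" using that
    by (intro eq_vecI) (auto simp: scalar_prod_def)
  have psd0: "psd k (0\<^sub>m k k)" unfolding psd_def symm_def by (auto simp: z scalar_prod_def)
  have tr0: "mtrace (0\<^sub>m k k) = 0" unfolding mtrace_def by simp
  have eq: "0\<^sub>m n n = 0 \<cdot>\<^sub>m Wb + P * 0\<^sub>m k k * transpose_mat P"
    using Wb P by (intro eq_matI) auto
  show ?thesis unfolding What_def using psd0 tr0 eq P rho by fastforce
qed

lemma mat_unit_col: fixes M :: "real mat" assumes M: "M \<in> carrier_mat a b" and j: "j < b"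
  shows "M *\<^sub>v unit_vec b j = col M j"
  using M j unfolding carrier_mat_def by (intro eq_vecI) auto

lemma col_in_colspace: fixes M :: "real mat" assumes M: "M \<in> carrier_mat a b" and j: "j < b"
  shows "col M j \<in> colspace M"
  unfolding colspace_def using mat_unit_col[OF M j] M j by (intro CollectI exI[of _ "unit_vec b j"]) auto

lemma hcat_carrier: "A \<in> carrier_mat r a \<Longrightarrow> B \<in> carrier_mat r b \<Longrightarrow> hcat A B \<in> carrier_mat r (a + b)"
  unfolding hcat_def by auto

lemma hcat_col1: assumes "A \<in> carrier_mat r a" "B \<in> carrier_mat r b" "j < a"
  shows "col (hcat A B) j = col A j"
  using assms unfolding hcat_def by (intro eq_vecI) auto

lemma hcat_col2: assumes "A \<in> carrier_mat r a" "B \<in> carrier_mat r b" "j < b"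
  shows "col (hcat A B) (a + j) = col B j"
  using assms unfolding hcat_def by (intro eq_vecI) auto

lemma tmult_entry: "A \<in> carrier_mat r a \<Longrightarrow> B \<in> carrier_mat r b \<Longrightarrow> i < a \<Longrightarrow> j < b \<Longrightarrow>
  (transpose_mat A * B) $$ (i,j) = col A i \<bullet> col B j"
  by simp

lemma orth_split:
  assumes A: "A \<in> carrier_mat r a" and B: "B \<in> carrier_mat r b"
    and H: "transpose_mat (hcat A B) * hcat A B = 1\<^sub>m (a + b)"
  shows "transpose_mat A * A = 1\<^sub>m a" "transpose_mat B * B = 1\<^sub>m b" "transpose_mat A * B = 0\<^sub>m a b"
proof -
  have Hc: "hcat A B \<in> carrier_mat r (a + b)" by (rule hcat_carrier[OF A B])
  have e: "col (hcat A B) i \<bullet> col (hcat A B) j = (if i = j then 1 else 0)" if "i < a + b" "j < a + b" for i j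
    using tmult_entry[OF Hc Hc that] H that by simp
  show "transpose_mat A * A = 1\<^sub>m a"
  proof (rule eq_matI)
    fix i j assume "i < dim_row (1\<^sub>m a)" "j < dim_col (1\<^sub>m a)"
    hence ij: "i < a" "j < a" by auto
    have "(transpose_mat A * A) $$ (i,j) = col (hcat A B) i \<bullet> col (hcat A B) j"
      using tmult_entry[OF A A ij] hcat_col1[OF A B ij(1)] hcat_col1[OF A B ij(2)] by simp
    also have "\<dots> = 1\<^sub>m a $$ (i,j)" using e[of i j] ij by simp
    finally show "(transpose_mat A * A) $$ (i,j) = 1\<^sub>m a $$ (i,j)" .
  qed (use A in auto)
  show "transpose_mat B * B = 1\<^sub>m b"
  proof (rule eq_matI)
    fix i j assume "i < dim_row (1\<^sub>m b)" "j < dim_col (1\<^sub>m b)"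
    hence ij: "i < b" "j < b" by auto
    have "(transpose_mat B * B) $$ (i,j) = col (hcat A B) (a + i) \<bullet> col (hcat A B) (a + j)"
      using tmult_entry[OF B B ij] hcat_col2[OF A B ij(1)] hcat_col2[OF A B ij(2)] by simp
    also have "\<dots> = 1\<^sub>m b $$ (i,j)" using e[of "a + i" "a + j"] ij by simp
    finally show "(transpose_mat B * B) $$ (i,j) = 1\<^sub>m b $$ (i,j)" .
  qed (use B in auto)
  show "transpose_mat A * B = 0\<^sub>m a b"
  proof (rule eq_matI)
    fix i j assume "i < dim_row (0\<^sub>m a b)" "j < dim_col (0\<^sub>m a b)"
    hence ij: "i < a" "j < b" by auto
    have "(transpose_mat A * B) $$ (i,j) = col (hcat A B) i \<bullet> col (hcat A B) (a + j)"
      using tmult_entry[OF A B ij] hcat_col1[OF A B ij(1)] hcat_col2[OF A B ij(2)] by simp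
    also have "\<dots> = 0\<^sub>m a b $$ (i,j)" using e[of i "a + j"] ij by simp
    finally show "(transpose_mat A * B) $$ (i,j) = 0\<^sub>m a b $$ (i,j)" .
  qed (use A B in auto)
qed

lemma symm_uminus: "symm n X \<Longrightarrow> symm n (- X)"
  unfolding symm_def by (auto simp: transpose_uminus)

lemma Fhat_upper:
  assumes Wb: "psd n Wb" "mtrace Wb = 1" and P: "P \<in> carrier_mat n k" "transpose_mat P * P = 1\<^sub>m k"
    and X: "symm n X" and n: "0 < n" and rho: "0 < \<rho>"
  shows "\<forall>W\<in>What \<rho> Wb P. frob W (- X) \<le> \<rho> * max (lmax (- X)) 0"
    "bdd_above ((\<lambda>W. frob W (- X)) ` What \<rho> Wb P)"
    "Fhat \<rho> C Wb P X \<le> Fobj \<rho> C X"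
    "W \<in> What \<rho> Wb P \<Longrightarrow> frob C X + frob W (- X) \<le> Fhat \<rho> C Wb P X"
proof -
  have mX: "symm n (- X)" by (rule symm_uminus[OF X])
  show B: "\<forall>W\<in>What \<rho> Wb P. frob W (- X) \<le> \<rho> * max (lmax (- X)) 0"
  proof
    fix W assume W: "W \<in> What \<rho> Wb P"
    have pW: "psd n W" and tW: "mtrace W \<le> \<rho>" using What_props[OF Wb P W] by auto
    have t0: "0 \<le> mtrace W" by (rule psd_trace_nonneg[OF pW])
    have "frob W (- X) \<le> mtrace W * lmax (- X)" by (rule trace_bound[OF pW mX n])
    also have "\<dots> \<le> \<rho> * max (lmax (- X)) 0"
    proof (cases "lmax (- X) \<ge> 0")
      case True thus ?thesis using tW by (simp add: mult_right_mono)
    next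
      case False
      hence "mtrace W * lmax (- X) \<le> 0" using t0 by (simp add: mult_nonneg_nonpos)
      moreover have "max (lmax (- X)) 0 = 0" using False by simp
      ultimately show ?thesis by simp
    qed
    finally show "frob W (- X) \<le> \<rho> * max (lmax (- X)) 0" .
  qed
  show bdd: "bdd_above ((\<lambda>W. frob W (- X)) ` What \<rho> Wb P)"
    using B by (intro bdd_aboveI2) blast
  have ne: "What \<rho> Wb P \<noteq> {}" using zero_in_What[OF psd_carrier[OF Wb(1)] P(1) less_imp_le[OF rho]] by auto
  have "(SUP W\<in>What \<rho> Wb P. frob W (- X)) \<le> \<rho> * max (lmax (- X)) 0"
    using B ne by (intro cSUP_least) auto
  thus "Fhat \<rho> C Wb P X \<le> Fobj \<rho> C X" unfolding Fhat_def Fobj_def by simp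
  assume W: "W \<in> What \<rho> Wb P"
  have "frob W (- X) \<le> (SUP W\<in>What \<rho> Wb P. frob W (- X))" by (rule cSUP_upper[OF W bdd])
  thus "frob C X + frob W (- X) \<le> Fhat \<rho> C Wb P X" unfolding Fhat_def by simp
qed

lemma symm_carrier: "symm n X \<Longrightarrow> X \<in> carrier_mat n n" unfolding symm_def by auto

lemma symm_add: "symm n A \<Longrightarrow> symm n B \<Longrightarrow> symm n (A + B)"
  unfolding symm_def by (auto simp: transpose_add)

lemma symm_minus: "symm n A \<Longrightarrow> symm n B \<Longrightarrow> symm n (A - B)"
  unfolding symm_def by (auto simp: transpose_minus)

lemma symm_smult: assumes "symm n A" shows "symm n (c \<cdot>\<^sub>m A)"
proof -
  have "transpose_mat (c \<cdot>\<^sub>m A) = c \<cdot>\<^sub>m transpose_mat A" by (rule eq_matI) auto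
  thus ?thesis using assms unfolding symm_def by auto
qed

lemma symm_Astar: assumes "\<forall>i<m. symm n (A i)" shows "symm n (Astar n m A y)"
proof -
  have "A k $$ (i, j) = A k $$ (j, i)" if "k < m" "i < n" "j < n" for k i j
    using assms that unfolding symm_def by (metis carrier_matD index_transpose_mat(1))
  thus ?thesis unfolding symm_def Astar_def by (intro conjI eq_matI) (auto intro!: sum.cong)
qed

lemma psd_symm: "psd n W \<Longrightarrow> symm n W" unfolding psd_def by auto

lemma sym_scalar: assumes M: "symm n M" and v: "v \<in> carrier_vec n" and w: "w \<in> carrier_vec n"
  shows "(M *\<^sub>v v) \<bullet> w = v \<bullet> (M *\<^sub>v w)"
proof -
  have Mc: "M \<in> carrier_mat n n" and Mt: "transpose_mat M = M" using M unfolding symm_def by auto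
  show ?thesis using transpose_vec_mult_scalar[OF Mc w v] Mt by simp
qed

lemma top_eig:
  assumes M: "symm n M" and n: "0 < n" and U: "U \<in> carrier_mat n n" "transpose_mat U * U = 1\<^sub>m n"
    and eig: "\<forall>j<n. M *\<^sub>v col U j = \<mu> j \<cdot>\<^sub>v col U j"
    and ord: "\<forall>i j. i \<le> j \<longrightarrow> j < n \<longrightarrow> \<mu> j \<le> \<mu> i"
  shows "lmax M \<le> \<mu> 0"
proof (rule ccontr)
  assume gt: "\<not> lmax M \<le> \<mu> 0"
  have Mc: "M \<in> carrier_mat n n" using M symm_carrier by auto
  obtain w where w: "w \<in> carrier_vec n" "w \<noteq> 0\<^sub>v n" "M *\<^sub>v w = lmax M \<cdot>\<^sub>v w"
    using lmax_props(1)[OF M n] Mc unfolding eigenvalue_def eigenvector_def by auto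
  have orth: "col U j \<bullet> w = 0" if j: "j < n" for j
  proof -
    have cu: "col U j \<in> carrier_vec n" using U j by simp
    have "\<mu> j \<le> \<mu> 0" using ord j by auto
    hence ne: "\<mu> j \<noteq> lmax M" using gt by auto
    have "\<mu> j * (col U j \<bullet> w) = (M *\<^sub>v col U j) \<bullet> w" using eig j cu w by simp
    also have "\<dots> = col U j \<bullet> (M *\<^sub>v w)" by (rule sym_scalar[OF M cu w(1)])
    also have "\<dots> = lmax M * (col U j \<bullet> w)" using w cu by simp
    finally show ?thesis using ne by simp
  qed
  have Utw: "transpose_mat U *\<^sub>v w = 0\<^sub>v n"
    using U orth by (intro eq_vecI) auto
  have UUt: "U * transpose_mat U = 1\<^sub>m n"
    using mat_mult_left_right_inverse[of "transpose_mat U" n U] U by auto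
  have "w = (U * transpose_mat U) *\<^sub>v w" using UUt w by simp
  also have "\<dots> = U *\<^sub>v (transpose_mat U *\<^sub>v w)" using U w by (intro assoc_mult_mat_vec) auto
  also have "\<dots> = 0\<^sub>v n" unfolding Utw using U by (intro eq_vecI) (auto simp: scalar_prod_def)
  finally show False using w(2) by simp
qed

lemma outer_mult_vec: assumes u: "u \<in> carrier_vec k" and x: "x \<in> carrier_vec k"
  shows "outer u *\<^sub>v x = (u \<bullet> x) \<cdot>\<^sub>v u"
proof (rule eq_vecI)
  fix i assume "i < dim_vec ((u \<bullet> x) \<cdot>\<^sub>v u)"
  hence i: "i < k" using u by simp
  have "row (outer u) i = u $ i \<cdot>\<^sub>v u" using u i unfolding outer_def by (intro eq_vecI) auto
  thus "(outer u *\<^sub>v x) $ i = ((u \<bullet> x) \<cdot>\<^sub>v u) $ i" using u x i unfolding outer_def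
    by (simp add: mult.commute)
qed (use u in \<open>auto simp: outer_def\<close>)

lemma psd_outer: assumes u: "u \<in> carrier_vec k" shows "psd k (outer u)"
proof -
  have c: "outer u \<in> carrier_mat k k" using u by simp
  have t: "transpose_mat (outer u) = outer u" unfolding outer_def by (rule eq_matI) auto
  have "0 \<le> x \<bullet> (outer u *\<^sub>v x)" if x: "x \<in> carrier_vec k" for x
  proof -
    have "x \<bullet> (outer u *\<^sub>v x) = (u \<bullet> x) * (x \<bullet> u)" using outer_mult_vec[OF u x] u x by simp
    also have "\<dots> = (u \<bullet> x)^2" using comm_scalar_prod[OF x u] by (simp add: power2_eq_square)
    finally show ?thesis by simp
  qed
  thus ?thesis unfolding psd_def symm_def using c t by auto
qed

lemma mtrace_outer: "u \<in> carrier_vec k \<Longrightarrow> mtrace (outer u) = u \<bullet> u"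
  unfolding mtrace_def outer_def scalar_prod_def by (auto simp: atLeast0LessThan)

lemma BSBt_outer: assumes B: "B \<in> carrier_mat n k" and u: "u \<in> carrier_vec k"
  shows "B * outer u * transpose_mat B = outer (B *\<^sub>v u)"
proof -
  have r1: "row (B * outer u) i = (B *\<^sub>v u) $ i \<cdot>\<^sub>v u" if i: "i < n" for i
  proof (rule eq_vecI)
    fix j assume "j < dim_vec ((B *\<^sub>v u) $ i \<cdot>\<^sub>v u)"
    hence j: "j < k" using u by simp
    have "col (outer u) j = u $ j \<cdot>\<^sub>v u" using u j unfolding outer_def by (intro eq_vecI) auto
    thus "row (B * outer u) i $ j = ((B *\<^sub>v u) $ i \<cdot>\<^sub>v u) $ j"
      using B u i j by (simp add: outer_def mult.commute)
  qed (use B u in \<open>auto simp: outer_def\<close>)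
  show ?thesis
  proof (rule eq_matI)
    fix i j assume "i < dim_row (outer (B *\<^sub>v u))" "j < dim_col (outer (B *\<^sub>v u))"
    hence ij: "i < n" "j < n" using B by (auto simp: outer_def)
    have rj: "row B j \<in> carrier_vec k" using B ij by simp
    have "(B * outer u * transpose_mat B) $$ (i,j) = row (B * outer u) i \<bullet> row B j"
      using B u ij by (simp add: outer_def)
    also have "\<dots> = (B *\<^sub>v u) $ i * (u \<bullet> row B j)" using r1[OF ij(1)] u rj by simp
    also have "u \<bullet> row B j = (B *\<^sub>v u) $ j" using comm_scalar_prod[OF u rj] B ij by simp
    finally show "(B * outer u * transpose_mat B) $$ (i,j) = outer (B *\<^sub>v u) $$ (i,j)"
      using B ij by (simp add: outer_def)
  qed (use B u in \<open>auto simp: outer_def\<close>)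
qed

lemma fnorm_sq: assumes X: "X \<in> carrier_mat n n"
  shows "(fnorm X)^2 = (\<Sum>i<n. \<Sum>j<n. (X $$ (i,j))^2)"
proof -
  have "frob (transpose_mat X) X = (\<Sum>i<n. \<Sum>j<n. X $$ (j,i) * X $$ (j,i))"
    using X by (subst frob_sum[of _ n n]) (auto intro!: sum.cong)
  also have "\<dots> = (\<Sum>i<n. \<Sum>j<n. (X $$ (i,j))^2)" by (subst sum.swap) (simp add: power2_eq_square)
  finally have e: "frob (transpose_mat X) X = (\<Sum>i<n. \<Sum>j<n. (X $$ (i,j))^2)" .
  have "0 \<le> (\<Sum>i<n. \<Sum>j<n. (X $$ (i,j))^2)" by (intro sum_nonneg) auto
  thus ?thesis unfolding fnorm_def e by simp
qed

lemma fnorm_expand: assumes G: "G \<in> carrier_mat n n" and H: "symm n H"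
  shows "(fnorm (G + t \<cdot>\<^sub>m H))^2 = (fnorm G)^2 + t * (2 * frob G H) + t^2 * (fnorm H)^2"
proof -
  have Hc: "H \<in> carrier_mat n n" using H symm_carrier by auto
  have Hs: "H $$ (i,j) = H $$ (j,i)" if "i < n" "j < n" for i j
    using H that unfolding symm_def by (metis carrier_matD index_transpose_mat(1))
  have fr: "frob G H = (\<Sum>i<n. \<Sum>j<n. G $$ (i,j) * H $$ (i,j))"
    unfolding frob_sum[OF G Hc] using Hs by (auto intro!: sum.cong)
  have "(fnorm (G + t \<cdot>\<^sub>m H))^2 = (\<Sum>i<n. \<Sum>j<n. (G $$ (i,j) + t * H $$ (i,j))^2)"
    using G Hc by (subst fnorm_sq[of _ n]) (auto intro!: sum.cong)
  also have "\<dots> = (\<Sum>i<n. \<Sum>j<n. (G $$ (i,j))^2) + t * (2 * (\<Sum>i<n. \<Sum>j<n. G $$ (i,j) * H $$ (i,j)))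
        + t^2 * (\<Sum>i<n. \<Sum>j<n. (H $$ (i,j))^2)"
    by (simp add: power2_eq_square algebra_simps sum.distrib sum_distrib_left)
  finally show ?thesis using fnorm_sq[OF G] fnorm_sq[OF Hc] fr by simp
qed

lemma pos_small:
  fixes a b :: real
  assumes h: "\<forall>s. 0 < s \<and> s \<le> 1 \<longrightarrow> 0 \<le> a * s + b * s^2"
  shows "0 \<le> a"
proof (rule ccontr)
  assume a: "\<not> 0 \<le> a"
  define s where "s = min 1 (- a / (2 * (\<bar>b\<bar> + 1)))"
  have d: "2 * (\<bar>b\<bar> + 1) > 0" by simp
  have q: "0 < - a / (2 * (\<bar>b\<bar> + 1))" using a d by (intro divide_pos_pos) auto
  have sp: "0 < s" unfolding s_def using q by simp
  have s1: "s \<le> 1" unfolding s_def by simp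
  have s2: "s \<le> - a / (2 * (\<bar>b\<bar> + 1))" unfolding s_def by simp
  have "\<bar>b\<bar> * s \<le> (\<bar>b\<bar> + 1) * s" using sp by (simp add: mult_right_mono)
  also have "\<dots> \<le> (\<bar>b\<bar> + 1) * (- a / (2 * (\<bar>b\<bar> + 1)))" using s2 by (intro mult_left_mono) auto
  also have "\<dots> = - a / 2" using d by (simp add: field_simps)
  finally have bs: "\<bar>b\<bar> * s \<le> - a / 2" .
  have "b * s^2 \<le> \<bar>b\<bar> * s * s" using sp by (simp add: power2_eq_square mult_right_mono)
  also have "\<dots> \<le> (- a / 2) * s" using mult_right_mono[OF bs less_imp_le[OF sp]] by simp
  finally have "a * s + b * s^2 \<le> a * s + (- a / 2) * s" by simp
  also have "\<dots> = (a / 2) * s" by (simp add: algebra_simps)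
  also have "\<dots> < 0" using a sp by (simp add: mult_neg_pos)
  finally show False using h sp s1 by force
qed

lemma Astar_carrier: "Astar n m A y \<in> carrier_mat n n" unfolding Astar_def by simp

lemma Astar_step: assumes ys: "ys \<in> carrier_vec m" and k: "k < m" and Ak: "A k \<in> carrier_mat n n"
  shows "Astar n m A (ys + t \<cdot>\<^sub>v unit_vec m k) = Astar n m A ys + t \<cdot>\<^sub>m A k"
proof (rule eq_matI)
  fix i j assume "i < dim_row (Astar n m A ys + t \<cdot>\<^sub>m A k)" "j < dim_col (Astar n m A ys + t \<cdot>\<^sub>m A k)"
  hence ij: "i < n" "j < n" using Ak by (auto simp: Astar_def)
  have "(\<Sum>l<m. (ys + t \<cdot>\<^sub>v unit_vec m k) $ l * A l $$ (i, j))
      = (\<Sum>l<m. ys $ l * A l $$ (i, j) + (if l = k then t * A l $$ (i,j) else 0))"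
    using ys by (intro sum.cong) (auto simp: algebra_simps unit_vec_def)
  also have "\<dots> = (\<Sum>l<m. ys $ l * A l $$ (i, j)) + t * A k $$ (i,j)"
    using k by (simp add: sum.distrib sum.delta)
  finally show "Astar n m A (ys + t \<cdot>\<^sub>v unit_vec m k) $$ (i, j) = (Astar n m A ys + t \<cdot>\<^sub>m A k) $$ (i, j)"
    using ij carrier_matD[OF Ak] by (simp add: Astar_def)
qed (use Ak in \<open>auto simp: Astar_def\<close>)

lemma opt_y:
  assumes Kc: "K \<in> carrier_mat n n" and Ai: "\<forall>i<m. symm n (A i)" and ys: "ys \<in> carrier_vec m"
    and d: "d \<in> carrier_vec m" and alpha: "\<alpha> > 0"
    and min: "\<forall>y\<in>carrier_vec m. c0 - d \<bullet> ys + 1 / (2 * \<alpha>) * (fnorm (K + Astar n m A ys))\<^sup>2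
        \<le> c0 - d \<bullet> y + 1 / (2 * \<alpha>) * (fnorm (K + Astar n m A y))\<^sup>2"
    and k: "k < m"
  shows "d $ k = (1 / \<alpha>) * frob (K + Astar n m A ys) (A k)"
proof -
  define G where "G = K + Astar n m A ys"
  have Gc: "G \<in> carrier_mat n n" unfolding G_def using Kc by (simp add: Astar_carrier)
  have H: "symm n (A k)" using Ai k by auto
  have Hc: "A k \<in> carrier_mat n n" using H symm_carrier by auto
  define f2 where "f2 = (fnorm (A k))^2"
  have "\<forall>t. (d $ k - frob G (A k) / \<alpha>) * t + (- f2 / (2 * \<alpha>)) * t^2 \<le> 0"
  proof
    fix t :: real
    define y where "y = ys + t \<cdot>\<^sub>v unit_vec m k"
    have y: "y \<in> carrier_vec m" unfolding y_def using ys by simp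
    have Ay: "K + Astar n m A y = G + t \<cdot>\<^sub>m A k"
      unfolding y_def Astar_step[of ys m k A n t, OF ys k Hc] G_def using Kc Hc
      by (intro eq_matI) (auto simp: Astar_def)
    have dy: "d \<bullet> y = d \<bullet> ys + t * d $ k"
      unfolding y_def using d ys k by (simp add: scalar_prod_add_distrib[of _ m])
    have "c0 - d \<bullet> ys + 1 / (2 * \<alpha>) * (fnorm G)\<^sup>2 \<le> c0 - d \<bullet> y + 1 / (2 * \<alpha>) * (fnorm (G + t \<cdot>\<^sub>m A k))\<^sup>2"
      using min y unfolding G_def[symmetric] Ay[symmetric] by blast
    also have "\<dots> = c0 - d \<bullet> ys - t * d $ k + 1 / (2 * \<alpha>) * ((fnorm G)^2 + t * (2 * frob G (A k)) + t^2 * (fnorm (A k))^2)"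
      unfolding fnorm_expand[OF Gc H] dy f2_def by simp
    finally show "(d $ k - frob G (A k) / \<alpha>) * t + (- f2 / (2 * \<alpha>)) * t^2 \<le> 0"
      using alpha by (simp add: field_simps f2_def)
  qed
  hence "d $ k - frob G (A k) / \<alpha> = 0" by (rule quad_zero)
  thus ?thesis unfolding G_def by simp
qed

lemma BSBt_entry: assumes B: "B \<in> carrier_mat n k" and S: "S \<in> carrier_mat k k" and ij: "i < n" "j < n"
  shows "(B * S * transpose_mat B) $$ (i,j) = (\<Sum>a<k. \<Sum>b<k. B $$ (i,a) * S $$ (a,b) * B $$ (j,b))"
proof -
  have e1: "(B * S) $$ (i,b) = (\<Sum>a<k. B $$ (i,a) * S $$ (a,b))" if "b < k" for b
    using B S ij that by (simp add: row_scalar[of _ n k])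
  have BS: "B * S \<in> carrier_mat n k" using B S by simp
  have "(B * S * transpose_mat B) $$ (i,j) = row (B * S) i \<bullet> col (transpose_mat B) j"
    by (subst index_mult_mat(1)) (use BS B ij in auto)
  also have "\<dots> = (\<Sum>b<k. (B * S) $$ (i,b) * (col (transpose_mat B) j) $ b)"
    by (rule row_scalar[OF BS ij(1)]) (use B ij in simp)
  also have "\<dots> = (\<Sum>b<k. (B * S) $$ (i,b) * B $$ (j,b))"
    by (rule sum.cong[OF refl]) (use B ij in simp)
  also have "\<dots> = (\<Sum>b<k. \<Sum>a<k. B $$ (i,a) * S $$ (a,b) * B $$ (j,b))"
    using e1 by (simp add: sum_distrib_right)
  also have "\<dots> = (\<Sum>a<k. \<Sum>b<k. B $$ (i,a) * S $$ (a,b) * B $$ (j,b))" by (rule sum.swap)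
  finally show ?thesis .
qed

lemma What_convex:
  assumes Wb: "Wb \<in> carrier_mat n n" and P: "P \<in> carrier_mat n k"
    and W1: "W1 \<in> What \<rho> Wb P" and W2: "W2 \<in> What \<rho> Wb P" and s: "0 \<le> s" "s \<le> 1"
  shows "W1 + s \<cdot>\<^sub>m (W2 - W1) \<in> What \<rho> Wb P"
proof -
  have dk: "dim_col P = k" using P by auto
  obtain g1 S1 where W1e: "W1 = g1 \<cdot>\<^sub>m Wb + P * S1 * transpose_mat P" and S1: "psd k S1"
     and g1: "0 \<le> g1" "g1 + mtrace S1 \<le> \<rho>" using W1 dk unfolding What_def by auto
  obtain g2 S2 where W2e: "W2 = g2 \<cdot>\<^sub>m Wb + P * S2 * transpose_mat P" and S2: "psd k S2"
     and g2: "0 \<le> g2" "g2 + mtrace S2 \<le> \<rho>" using W2 dk unfolding What_def by auto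
  have S1c: "S1 \<in> carrier_mat k k" and S2c: "S2 \<in> carrier_mat k k" using S1 S2 psd_carrier by auto
  define g where "g = (1 - s) * g1 + s * g2"
  define S where "S = (1 - s) \<cdot>\<^sub>m S1 + s \<cdot>\<^sub>m S2"
  have Sc: "S \<in> carrier_mat k k" unfolding S_def using S2c by simp
  have pS: "psd k S" unfolding S_def using s by (intro psd_add psd_smult S1 S2) auto
  have g: "0 \<le> g" unfolding g_def using s g1 g2 by simp
  have tS: "mtrace S = (1 - s) * mtrace S1 + s * mtrace S2"
    unfolding S_def using S1c S2c by (simp add: mtrace_add[of _ k] mtrace_smult)
  have "g + mtrace S = (1 - s) * (g1 + mtrace S1) + s * (g2 + mtrace S2)" unfolding tS g_def by (simp add: algebra_simps)
  also have "\<dots> \<le> (1 - s) * \<rho> + s * \<rho>" using s g1 g2 by (intro add_mono mult_left_mono) auto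
  finally have gt: "g + mtrace S \<le> \<rho>" by (simp add: algebra_simps)
  have eq: "W1 + s \<cdot>\<^sub>m (W2 - W1) = g \<cdot>\<^sub>m Wb + P * S * transpose_mat P"
  proof (rule eq_matI)
    fix i j assume "i < dim_row (g \<cdot>\<^sub>m Wb + P * S * transpose_mat P)" "j < dim_col (g \<cdot>\<^sub>m Wb + P * S * transpose_mat P)"
    hence ij: "i < n" "j < n" using P by auto
    have E1: "(P * S1 * transpose_mat P) $$ (i,j) = (\<Sum>a<k. \<Sum>b<k. P $$ (i,a) * S1 $$ (a,b) * P $$ (j,b))"
      by (rule BSBt_entry[OF P S1c ij])
    have E2: "(P * S2 * transpose_mat P) $$ (i,j) = (\<Sum>a<k. \<Sum>b<k. P $$ (i,a) * S2 $$ (a,b) * P $$ (j,b))"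
      by (rule BSBt_entry[OF P S2c ij])
    have ES: "(P * S * transpose_mat P) $$ (i,j) = (\<Sum>a<k. \<Sum>b<k. P $$ (i,a) * S $$ (a,b) * P $$ (j,b))"
      by (rule BSBt_entry[OF P Sc ij])
    have W1ij: "W1 $$ (i,j) = g1 * Wb $$ (i,j) + (P * S1 * transpose_mat P) $$ (i,j)"
      unfolding W1e using ij Wb P S1c by (simp del: assoc_mult_mat index_mult_mat(1))
    have W2ij: "W2 $$ (i,j) = g2 * Wb $$ (i,j) + (P * S2 * transpose_mat P) $$ (i,j)"
      unfolding W2e using ij Wb P S2c by (simp del: assoc_mult_mat index_mult_mat(1))
    have Wij: "(g \<cdot>\<^sub>m Wb + P * S * transpose_mat P) $$ (i,j) = g * Wb $$ (i,j) + (P * S * transpose_mat P) $$ (i,j)"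
      using ij Wb P Sc by (simp del: assoc_mult_mat index_mult_mat(1))
    have Sab: "S $$ (a,b) = (1 - s) * S1 $$ (a,b) + s * S2 $$ (a,b)" if "a < k" "b < k" for a b
      unfolding S_def using that S1c S2c by simp
    have inner: "(1 - s) * (\<Sum>a<k. \<Sum>b<k. P $$ (i,a) * S1 $$ (a,b) * P $$ (j,b))
         + s * (\<Sum>a<k. \<Sum>b<k. P $$ (i,a) * S2 $$ (a,b) * P $$ (j,b))
         = (\<Sum>a<k. \<Sum>b<k. P $$ (i,a) * S $$ (a,b) * P $$ (j,b))"
    proof -
      have "(1 - s) * (\<Sum>a<k. \<Sum>b<k. P $$ (i,a) * S1 $$ (a,b) * P $$ (j,b))
         + s * (\<Sum>a<k. \<Sum>b<k. P $$ (i,a) * S2 $$ (a,b) * P $$ (j,b))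
         = (\<Sum>a<k. \<Sum>b<k. (1 - s) * (P $$ (i,a) * S1 $$ (a,b) * P $$ (j,b)) + s * (P $$ (i,a) * S2 $$ (a,b) * P $$ (j,b)))"
        by (simp add: sum.distrib sum_distrib_left)
      also have "\<dots> = (\<Sum>a<k. \<Sum>b<k. P $$ (i,a) * S $$ (a,b) * P $$ (j,b))"
        by (intro sum.cong refl) (simp add: Sab algebra_simps)
      finally show ?thesis .
    qed
    have "(W1 + s \<cdot>\<^sub>m (W2 - W1)) $$ (i,j) = W1 $$ (i,j) + s * (W2 $$ (i,j) - W1 $$ (i,j))"
      using ij W1e W2e Wb P by (simp del: assoc_mult_mat index_mult_mat(1))
    also have "\<dots> = g * Wb $$ (i,j) + ((1 - s) * (\<Sum>a<k. \<Sum>b<k. P $$ (i,a) * S1 $$ (a,b) * P $$ (j,b))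
         + s * (\<Sum>a<k. \<Sum>b<k. P $$ (i,a) * S2 $$ (a,b) * P $$ (j,b)))"
      unfolding W1ij W2ij E1 E2 g_def by (simp add: algebra_simps)
    also have "\<dots> = g * Wb $$ (i,j) + (\<Sum>a<k. \<Sum>b<k. P $$ (i,a) * S $$ (a,b) * P $$ (j,b))"
      using inner by simp
    also have "\<dots> = (g \<cdot>\<^sub>m Wb + P * S * transpose_mat P) $$ (i,j)"
      unfolding Wij ES ..
    finally show "(W1 + s \<cdot>\<^sub>m (W2 - W1)) $$ (i,j) = (g \<cdot>\<^sub>m Wb + P * S * transpose_mat P) $$ (i,j)" .
  qed (use P W1e W2e Wb in auto)
  show ?thesis unfolding What_def eq using pS dk g gt by auto
qed

lemma opt_W:
  assumes Wb: "Wb \<in> carrier_mat n n" and P: "P \<in> carrier_mat n k"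
    and Ws: "Ws \<in> What \<rho> Wb P" and W: "W \<in> What \<rho> Wb P"
    and sWs: "symm n Ws" and sW: "symm n W"
    and C: "C \<in> carrier_mat n n" and Om: "\<Omega> \<in> carrier_mat n n" and Y: "Y \<in> carrier_mat n n"
    and alpha: "\<alpha> > 0"
    and min: "\<forall>W\<in>What \<rho> Wb P. frob (Ws - C) \<Omega> - e + 1 / (2 * \<alpha>) * (fnorm (Ws - C + Y))\<^sup>2
        \<le> frob (W - C) \<Omega> - e + 1 / (2 * \<alpha>) * (fnorm (W - C + Y))\<^sup>2"
  shows "frob W (- (\<Omega> + (1 / \<alpha>) \<cdot>\<^sub>m (Ws - C + Y))) \<le> frob Ws (- (\<Omega> + (1 / \<alpha>) \<cdot>\<^sub>m (Ws - C + Y)))"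
proof -
  define D where "D = W - Ws"
  define G where "G = Ws - C + Y"
  have Wsc: "Ws \<in> carrier_mat n n" and Wc: "W \<in> carrier_mat n n" using sWs sW symm_carrier by auto
  have Dc: "D \<in> carrier_mat n n" unfolding D_def by (rule minus_carrier_mat[OF Wsc])
  have sD: "symm n D" unfolding D_def by (rule symm_minus[OF sW sWs])
  have Gc: "G \<in> carrier_mat n n" unfolding G_def using Y by simp
  define f2 where "f2 = (fnorm D)^2"
  have "\<forall>s. 0 < s \<and> s \<le> 1 \<longrightarrow> 0 \<le> (frob D \<Omega> + 1 / (2 * \<alpha>) * (2 * frob G D)) * s + (1 / (2 * \<alpha>) * f2) * s^2"
  proof (intro allI impI)
    fix s :: real assume s: "0 < s \<and> s \<le> 1"
    have mem: "Ws + s \<cdot>\<^sub>m D \<in> What \<rho> Wb P" unfolding D_def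
      by (rule What_convex[OF Wb P Ws W]) (use s in auto)
    have e1: "Ws + s \<cdot>\<^sub>m D - C = (Ws - C) + s \<cdot>\<^sub>m D"
      using Wsc Dc C by (intro eq_matI) auto
    have e2: "Ws + s \<cdot>\<^sub>m D - C + Y = G + s \<cdot>\<^sub>m D"
      unfolding G_def using Wsc Dc C Y by (intro eq_matI) auto
    have "frob (Ws - C) \<Omega> - e + 1 / (2 * \<alpha>) * (fnorm G)\<^sup>2
        \<le> frob (Ws + s \<cdot>\<^sub>m D - C) \<Omega> - e + 1 / (2 * \<alpha>) * (fnorm (Ws + s \<cdot>\<^sub>m D - C + Y))\<^sup>2"
      using min mem unfolding G_def by blast
    also have "\<dots> = frob (Ws - C) \<Omega> + s * frob D \<Omega> - e + 1 / (2 * \<alpha>) * ((fnorm G)^2 + s * (2 * frob G D) + s^2 * f2)"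
      unfolding e2 unfolding e1 fnorm_expand[OF Gc sD] f2_def
      using Wsc C Dc Om by (simp add: frob_add_left[of _ n] frob_smult_left[of _ n] minus_carrier_mat)
    finally show "0 \<le> (frob D \<Omega> + 1 / (2 * \<alpha>) * (2 * frob G D)) * s + (1 / (2 * \<alpha>) * f2) * s^2"
      by (simp add: algebra_simps)
  qed
  hence "0 \<le> frob D \<Omega> + 1 / (2 * \<alpha>) * (2 * frob G D)" by (rule pos_small)
  hence pos: "0 \<le> frob D \<Omega> + frob G D / \<alpha>" by simp
  define X where "X = \<Omega> + (1 / \<alpha>) \<cdot>\<^sub>m G"
  have Xc: "X \<in> carrier_mat n n" unfolding X_def using Gc by simp
  have "frob D X = frob D \<Omega> + (1 / \<alpha>) * frob D G"
    unfolding X_def using Dc Om Gc by (simp add: frob_add_right[of _ n] frob_smult_right[of _ n])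
  also have "frob D G = frob G D" by (rule frob_comm[OF Dc Gc])
  finally have "0 \<le> frob D X" using pos by simp
  also have "frob D X = frob W X - frob Ws X" unfolding D_def by (rule frob_minus_left[OF Wc Wsc Xc])
  finally have "frob Ws X \<le> frob W X" by simp
  thus ?thesis unfolding G_def[symmetric] X_def[symmetric]
    using frob_uminus_right[OF Wc Xc] frob_uminus_right[OF Wsc Xc] by simp
qed

lemma sandwich4:
  fixes T B S A :: "real mat"
  assumes T: "T \<in> carrier_mat a r" and B: "B \<in> carrier_mat r b" and S: "S \<in> carrier_mat b b" and A: "A \<in> carrier_mat r c"
  shows "T * (B * S * transpose_mat B) * A = (T * B) * S * (transpose_mat B * A)"
proof -
  have Bt: "transpose_mat B \<in> carrier_mat b r" using B by simp
  have BS: "B * S \<in> carrier_mat r b" using B S by simp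
  have BSBt: "B * S * transpose_mat B \<in> carrier_mat r r" using BS Bt by simp
  have "T * (B * S * transpose_mat B) * A = T * ((B * S * transpose_mat B) * A)"
    by (rule assoc_mult_mat[OF T BSBt A])
  also have "(B * S * transpose_mat B) * A = (B * S) * (transpose_mat B * A)"
    by (rule assoc_mult_mat[OF BS Bt A])
  also have "T * ((B * S) * (transpose_mat B * A)) = (T * (B * S)) * (transpose_mat B * A)"
    by (rule assoc_mult_mat[symmetric, OF T BS, of _ c]) (use Bt A in simp)
  also have "T * (B * S) = (T * B) * S" by (rule assoc_mult_mat[symmetric, OF T B S])
  finally show ?thesis .
qed

lemma block_extract:
  fixes A B S1 S2 :: "real mat"
  assumes A: "A \<in> carrier_mat r a" and B: "B \<in> carrier_mat r b" and S1: "S1 \<in> carrier_mat a a"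
    and S2: "S2 \<in> carrier_mat b b" and AA: "transpose_mat A * A = 1\<^sub>m a" and AB: "transpose_mat A * B = 0\<^sub>m a b"
  shows "transpose_mat A * (A * S1 * transpose_mat A + B * S2 * transpose_mat B) * A = S1"
proof -
  have BA: "transpose_mat B * A = 0\<^sub>m b a"
  proof -
    have "transpose_mat B * A = transpose_mat (transpose_mat A * B)"
      using transpose_mult[of "transpose_mat A" a r B b] A B by simp
    also have "\<dots> = 0\<^sub>m b a" unfolding AB by (intro eq_matI) auto
    finally show ?thesis .
  qed
  have X: "A * S1 * transpose_mat A \<in> carrier_mat r r" and Y: "B * S2 * transpose_mat B \<in> carrier_mat r r"
    using A B S1 S2 by auto
  have "transpose_mat A * (A * S1 * transpose_mat A + B * S2 * transpose_mat B) * A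
      = transpose_mat A * (A * S1 * transpose_mat A) * A + transpose_mat A * (B * S2 * transpose_mat B) * A"
    using A X Y by (simp add: mult_add_distrib_mat[of _ a r] add_mult_distrib_mat[of _ a r] del: assoc_mult_mat)
  also have "transpose_mat A * (A * S1 * transpose_mat A) * A = (transpose_mat A * A) * S1 * (transpose_mat A * A)"
    by (rule sandwich4[OF _ A S1 A]) (use A in simp)
  also have "\<dots> = S1" unfolding AA using S1 by simp
  also have "transpose_mat A * (B * S2 * transpose_mat B) * A = (transpose_mat A * B) * S2 * (transpose_mat B * A)"
    by (rule sandwich4[OF _ B S2 A]) (use A in simp)
  also have "\<dots> = 0\<^sub>m a a" unfolding AB BA using S2 by simp
  finally show ?thesis using S1 by simp
qed

lemma proj_colspace:
  fixes P :: "real mat"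
  assumes P: "P \<in> carrier_mat n k" and PP: "transpose_mat P * P = 1\<^sub>m k" and x: "x \<in> colspace P"
  shows "P *\<^sub>v (transpose_mat P *\<^sub>v x) = x"
proof -
  obtain z where z: "z \<in> carrier_vec k" and xz: "x = P *\<^sub>v z" using x P unfolding colspace_def by auto
  have "transpose_mat P *\<^sub>v (P *\<^sub>v z) = (transpose_mat P * P) *\<^sub>v z" using P z by simp
  also have "\<dots> = z" unfolding PP using z by simp
  finally show ?thesis unfolding xz by simp
qed

lemma orth_prod:
  fixes P Q :: "real mat"
  assumes P: "P \<in> carrier_mat n r" and PP: "transpose_mat P * P = 1\<^sub>m r"
    and Q: "Q \<in> carrier_mat r q" and QQ: "transpose_mat Q * Q = 1\<^sub>m q"
  shows "transpose_mat (P * Q) * (P * Q) = 1\<^sub>m q"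
proof -
  have Pt: "transpose_mat P \<in> carrier_mat r n" and Qt: "transpose_mat Q \<in> carrier_mat q r" using P Q by auto
  have "transpose_mat (P * Q) = transpose_mat Q * transpose_mat P" by (rule transpose_mult[OF P Q])
  hence "transpose_mat (P * Q) * (P * Q) = (transpose_mat Q * transpose_mat P) * (P * Q)" by simp
  also have "\<dots> = transpose_mat Q * (transpose_mat P * (P * Q))"
    by (rule assoc_mult_mat[OF Qt Pt, of _ q]) (use P Q in simp)
  also have "transpose_mat P * (P * Q) = (transpose_mat P * P) * Q" by (rule assoc_mult_mat[symmetric, OF Pt P Q])
  also have "\<dots> = Q" unfolding PP using Q by simp
  finally show ?thesis using QQ by simp
qed

lemma eq5:
  fixes P Q S :: "real mat"
  assumes P: "P \<in> carrier_mat n r" and Q: "Q \<in> carrier_mat r q" and S: "S \<in> carrier_mat q q"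
  shows "P * Q * S * transpose_mat Q * transpose_mat P = (P * Q) * S * transpose_mat (P * Q)"
proof -
  have PQS: "P * Q * S \<in> carrier_mat n q" using P Q S by simp
  have Qt: "transpose_mat Q \<in> carrier_mat q r" and Pt: "transpose_mat P \<in> carrier_mat r n" using P Q by auto
  have "transpose_mat (P * Q) = transpose_mat Q * transpose_mat P" by (rule transpose_mult[OF P Q])
  thus ?thesis using assoc_mult_mat[OF PQS Qt Pt] by simp
qed

lemma frob_Astar:
  assumes Ai: "\<forall>k<m. A k \<in> carrier_mat n n" and Y: "Y \<in> carrier_mat n n"
  shows "frob (Astar n m A y) Y = (\<Sum>k<m. y $ k * frob (A k) Y)"
proof -
  have "frob (Astar n m A y) Y = (\<Sum>i<n. \<Sum>j<n. (\<Sum>k<m. y $ k * A k $$ (i, j)) * Y $$ (j,i))"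
    using Y by (subst frob_sum[of _ n n]) (auto simp: Astar_def intro!: sum.cong)
  also have "\<dots> = (\<Sum>i<n. \<Sum>j<n. \<Sum>k<m. y $ k * (A k $$ (i, j) * Y $$ (j,i)))"
    by (simp add: sum_distrib_right mult.assoc)
  also have "\<dots> = (\<Sum>i<n. \<Sum>k<m. \<Sum>j<n. y $ k * (A k $$ (i, j) * Y $$ (j,i)))"
    by (rule sum.cong[OF refl]) (rule sum.swap)
  also have "\<dots> = (\<Sum>k<m. \<Sum>i<n. \<Sum>j<n. y $ k * (A k $$ (i, j) * Y $$ (j,i)))"
    by (rule sum.swap)
  also have "\<dots> = (\<Sum>k<m. y $ k * frob (A k) Y)"
    using Ai Y by (intro sum.cong refl) (simp add: frob_sum[of _ n n] sum_distrib_left)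
  finally show ?thesis .
qed

lemma add_rearr:
  fixes W X1 X2 :: "real mat"
  assumes "W \<in> carrier_mat n n" "X1 \<in> carrier_mat n n" "X2 \<in> carrier_mat n n"
  shows "a \<cdot>\<^sub>m W + (X1 + X2) = (a \<cdot>\<^sub>m W + X2) + X1"
  using assms by (intro eq_matI) auto

lemma gram_prod:
  fixes P Q :: "real mat"
  assumes P: "P \<in> carrier_mat n r" and PP: "transpose_mat P * P = 1\<^sub>m r"
    and Q: "Q \<in> carrier_mat r q"
  shows "transpose_mat (P * Q) * (P * Q) = transpose_mat Q * Q"
proof -
  have Pt: "transpose_mat P \<in> carrier_mat r n" and Qt: "transpose_mat Q \<in> carrier_mat q r" using P Q by auto
  have "transpose_mat (P * Q) = transpose_mat Q * transpose_mat P" by (rule transpose_mult[OF P Q])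
  hence "transpose_mat (P * Q) * (P * Q) = (transpose_mat Q * transpose_mat P) * (P * Q)" by simp
  also have "\<dots> = transpose_mat Q * (transpose_mat P * (P * Q))"
    by (rule assoc_mult_mat[OF Qt Pt, of _ q]) (use P Q in simp)
  also have "transpose_mat P * (P * Q) = (transpose_mat P * P) * Q" by (rule assoc_mult_mat[symmetric, OF Pt P Q])
  also have "\<dots> = Q" unfolding PP using Q by simp
  finally show ?thesis .
qed

theorem mainTheorem5:
  fixes n m r rp rc :: nat
    and \<rho> \<alpha> \<gamma>s :: real
    and b ys :: "real vec"
    and C \<Omega> Wb P Ws Ss Q1 Q2 \<Sigma>1 \<Sigma>2 Xs V P1 :: "real mat"
    and A :: "nat \<Rightarrow> real mat"
  assumes C: "symm n C"
    and Ai: "\<forall>i<m. symm n (A i)"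
    and Aindep: "\<forall>y\<in>carrier_vec m. Astar n m A y = 0\<^sub>m n n \<longrightarrow> y = 0\<^sub>v m"
    and b: "b \<in> carrier_vec m"
    and rho: "\<rho> > 0" and alpha: "\<alpha> > 0"
    and Omega: "symm n \<Omega>"
    and Wb: "psd n Wb" "mtrace Wb = 1"
    and P: "P \<in> carrier_mat n r" "transpose_mat P * P = 1\<^sub>m r"
    and rp: "rp \<le> r" and rc: "rc \<ge> 1"
    and Ws_in: "Ws \<in> What \<rho> Wb P" and ys_in: "ys \<in> carrier_vec m"
    and Ws_min: "\<forall>W \<in> What \<rho> Wb P. \<forall>y \<in> carrier_vec m.
        frob (Ws - C) \<Omega> - (b - Aop m A \<Omega>) \<bullet> ys + 1 / (2 * \<alpha>) * (fnorm (Ws - C + Astar n m A ys))\<^sup>2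
        \<le> frob (W - C) \<Omega> - (b - Aop m A \<Omega>) \<bullet> y + 1 / (2 * \<alpha>) * (fnorm (W - C + Astar n m A y))\<^sup>2"
    and Ws_eq: "Ws = \<gamma>s \<cdot>\<^sub>m Wb + P * Ss * transpose_mat P"
    and Ss: "psd r Ss" "\<gamma>s \<ge> 0" "\<gamma>s + mtrace Ss \<le> \<rho>"
    and Xs: "Xs = \<Omega> + (1 / \<alpha>) \<cdot>\<^sub>m (Ws - C + Astar n m A ys)"
    and Q: "Q1 \<in> carrier_mat r rp" "Q2 \<in> carrier_mat r (r - rp)"
      "transpose_mat (hcat Q1 Q2) * hcat Q1 Q2 = 1\<^sub>m r"
    and Sig: "\<Sigma>1 \<in> carrier_mat rp rp" "\<Sigma>2 \<in> carrier_mat (r - rp) (r - rp)"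
      "diagonal \<Sigma>1" "diagonal \<Sigma>2"
      "\<forall>i<rp. \<forall>j<r - rp. \<Sigma>2 $$ (j, j) \<le> \<Sigma>1 $$ (i, i)"
    and Ss_eig: "Ss = Q1 * \<Sigma>1 * transpose_mat Q1 + Q2 * \<Sigma>2 * transpose_mat Q2"
    and V: "V \<in> carrier_mat n rc" "transpose_mat V * V = 1\<^sub>m rc"
    and V_eig: "\<exists>U \<mu>. U \<in> carrier_mat n n \<and> transpose_mat U * U = 1\<^sub>m n
        \<and> (\<forall>j<n. (- Xs) *\<^sub>v col U j = \<mu> j \<cdot>\<^sub>v col U j)
        \<and> (\<forall>i j. i \<le> j \<longrightarrow> j < n \<longrightarrow> \<mu> j \<le> \<mu> i)
        \<and> (\<forall>j<rc. col V j = col U j)"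
    and P1: "P1 \<in> carrier_mat n (dim_col P1)" "transpose_mat P1 * P1 = 1\<^sub>m (dim_col P1)"
      "colspace P1 = colspace (hcat V (P * Q1))"
    and pos: "\<gamma>s + mtrace \<Sigma>2 > 0"
  shows
    "(\<forall>X. symm n X \<longrightarrow>
        Fhat \<rho> C ((1 / (\<gamma>s + mtrace \<Sigma>2)) \<cdot>\<^sub>m
           (\<gamma>s \<cdot>\<^sub>m Wb + P * Q2 * \<Sigma>2 * transpose_mat Q2 * transpose_mat P)) P1 X
        \<le> Fobj \<rho> C X)
   \<and> (let g = (if lmax (- Xs) > 0 then C - \<rho> \<cdot>\<^sub>m outer (col V 0) else C) in
       (\<forall>X. symm n X \<longrightarrow>
          Fhat \<rho> C ((1 / (\<gamma>s + mtrace \<Sigma>2)) \<cdot>\<^sub>m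
             (\<gamma>s \<cdot>\<^sub>m Wb + P * Q2 * \<Sigma>2 * transpose_mat Q2 * transpose_mat P)) P1 X
          \<ge> Fobj \<rho> C Xs + frob g (X - Xs))
       \<and> (\<forall>X. symm n X \<longrightarrow> Fobj \<rho> C X \<ge> Fobj \<rho> C Xs + frob g (X - Xs)))
   \<and> (\<forall>X. symm n X \<longrightarrow> Aop m A X = b \<longrightarrow>
        Fhat \<rho> C ((1 / (\<gamma>s + mtrace \<Sigma>2)) \<cdot>\<^sub>m
           (\<gamma>s \<cdot>\<^sub>m Wb + P * Q2 * \<Sigma>2 * transpose_mat Q2 * transpose_mat P)) P1 X
        \<ge> Fhat \<rho> C Wb P Xs + frob (\<alpha> \<cdot>\<^sub>m (\<Omega> - Xs)) (X - Xs))"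
proof -
  have Cc: "C \<in> carrier_mat n n" using C symm_carrier by auto
  have Omc: "\<Omega> \<in> carrier_mat n n" using Omega symm_carrier by auto
  have Wbc: "Wb \<in> carrier_mat n n" using Wb(1) psd_carrier by auto
  have Ssc: "Ss \<in> carrier_mat r r" using Ss(1) psd_carrier by auto
  have Aic: "\<forall>k<m. A k \<in> carrier_mat n n" using Ai symm_carrier by auto
  define k1 where "k1 = dim_col P1"
  have P1c: "P1 \<in> carrier_mat n k1" using P1(1) unfolding k1_def .
  have P1o: "transpose_mat P1 * P1 = 1\<^sub>m k1" using P1(2) unfolding k1_def .
  define v where "v = col V 0"
  have rc0: "0 < rc" using rc by simp
  have vc: "v \<in> carrier_vec n" unfolding v_def using V(1) rc0 by simp
  have vv: "v \<bullet> v = 1" using tmult_entry[OF V(1) V(1) rc0 rc0] V(2) rc0 unfolding v_def by simp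
  have n0: "0 < n"
  proof (rule ccontr)
    assume "\<not> 0 < n"
    hence "n = 0" by simp
    hence "v \<bullet> v = 0" using vc by (simp add: scalar_prod_def)
    thus False using vv by simp
  qed
  have rsum: "rp + (r - rp) = r" using rp by simp
  have Qo: "transpose_mat (hcat Q1 Q2) * hcat Q1 Q2 = 1\<^sub>m (rp + (r - rp))" using Q(3) rsum by simp
  have Q11: "transpose_mat Q1 * Q1 = 1\<^sub>m rp" and Q22: "transpose_mat Q2 * Q2 = 1\<^sub>m (r - rp)"
    and Q12: "transpose_mat Q1 * Q2 = 0\<^sub>m rp (r - rp)"
    using orth_split[OF Q(1) Q(2) Qo] by auto
  have Q21: "transpose_mat Q2 * Q1 = 0\<^sub>m (r - rp) rp"
  proof -
    have "transpose_mat Q2 * Q1 = transpose_mat (transpose_mat Q1 * Q2)"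
      using transpose_mult[of "transpose_mat Q1" rp r Q2 "r - rp"] Q by simp
    also have "\<dots> = 0\<^sub>m (r - rp) rp" unfolding Q12 by (intro eq_matI) auto
    finally show ?thesis .
  qed
  have Sig1e: "transpose_mat Q1 * Ss * Q1 = \<Sigma>1"
    unfolding Ss_eig by (rule block_extract[OF Q(1) Q(2) Sig(1) Sig(2) Q11 Q12])
  have Ss_eig': "Ss = Q2 * \<Sigma>2 * transpose_mat Q2 + Q1 * \<Sigma>1 * transpose_mat Q1"
    unfolding Ss_eig using Q Sig by (intro comm_add_mat[of _ r r]) auto
  have Sig2e: "transpose_mat Q2 * Ss * Q2 = \<Sigma>2"
    unfolding Ss_eig' by (rule block_extract[OF Q(2) Q(1) Sig(2) Sig(1) Q22 Q21])
  have pS1: "psd rp \<Sigma>1"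
    using psd_BSBt[OF Ss(1), of "transpose_mat Q1" rp] Q(1) Sig1e by simp
  have pS2: "psd (r - rp) \<Sigma>2"
    using psd_BSBt[OF Ss(1), of "transpose_mat Q2" "r - rp"] Q(2) Sig2e by simp
  have trSs: "mtrace Ss = mtrace \<Sigma>1 + mtrace \<Sigma>2"
  proof -
    have "mtrace Ss = mtrace (Q1 * \<Sigma>1 * transpose_mat Q1) + mtrace (Q2 * \<Sigma>2 * transpose_mat Q2)"
      unfolding Ss_eig by (rule mtrace_add[of _ r]) (use Q Sig in auto)
    also have "\<dots> = mtrace \<Sigma>1 + mtrace \<Sigma>2"
      using mtrace_BSBt[OF Q(1) Q11 Sig(1)] mtrace_BSBt[OF Q(2) Q22 Sig(2)] by simp
    finally show ?thesis .
  qed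
  define c where "c = \<gamma>s + mtrace \<Sigma>2"
  have cpos: "0 < c" unfolding c_def using pos .
  define PQ1 where "PQ1 = P * Q1"
  define PQ2 where "PQ2 = P * Q2"
  have PQ1c: "PQ1 \<in> carrier_mat n rp" unfolding PQ1_def using P Q by simp
  have PQ2c: "PQ2 \<in> carrier_mat n (r - rp)" unfolding PQ2_def using P Q by simp
  have PQ1o: "transpose_mat PQ1 * PQ1 = 1\<^sub>m rp" unfolding PQ1_def by (rule orth_prod[OF P(1) P(2) Q(1) Q11])
  have PQ2o: "transpose_mat PQ2 * PQ2 = 1\<^sub>m (r - rp)" unfolding PQ2_def by (rule orth_prod[OF P(1) P(2) Q(2) Q22])
  define M2 where "M2 = \<gamma>s \<cdot>\<^sub>m Wb + PQ2 * \<Sigma>2 * transpose_mat PQ2"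
  have M2c: "M2 \<in> carrier_mat n n" unfolding M2_def using PQ2c Sig(2) by simp
  define Wb' where "Wb' = (1 / (\<gamma>s + mtrace \<Sigma>2)) \<cdot>\<^sub>m
           (\<gamma>s \<cdot>\<^sub>m Wb + P * Q2 * \<Sigma>2 * transpose_mat Q2 * transpose_mat P)"
  have Wb'e: "Wb' = (1 / c) \<cdot>\<^sub>m M2"
    unfolding Wb'_def M2_def c_def PQ2_def using eq5[OF P(1) Q(2) Sig(2)] by simp
  have pM2: "psd n M2" unfolding M2_def by (intro psd_add psd_smult Wb(1) Ss(2) psd_BSBt[OF pS2 PQ2c])
  have tM2: "mtrace M2 = c"
  proof -
    have "mtrace M2 = mtrace (\<gamma>s \<cdot>\<^sub>m Wb) + mtrace (PQ2 * \<Sigma>2 * transpose_mat PQ2)"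
      unfolding M2_def by (rule mtrace_add[of _ n]) (use Wbc PQ2c Sig(2) in auto)
    also have "\<dots> = c" unfolding c_def using mtrace_smult[OF Wbc] Wb(2) mtrace_BSBt[OF PQ2c PQ2o Sig(2)] by simp
    finally show ?thesis .
  qed
  have pWb': "psd n Wb'" unfolding Wb'e using cpos by (intro psd_smult pM2) auto
  have tWb': "mtrace Wb' = 1" unfolding Wb'e using mtrace_smult[OF M2c] tM2 cpos by simp
  have Wb'c: "Wb' \<in> carrier_mat n n" using pWb' psd_carrier by auto
  note FU = Fhat_upper[OF pWb' tWb' P1c P1o _ n0 rho]
  have sWs: "symm n Ws" using What_props(1)[OF Wb P Ws_in] psd_symm by auto
  have sXs: "symm n Xs" unfolding Xs
    by (intro symm_add symm_smult symm_minus Omega sWs C symm_Astar Ai)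
  have Xsc: "Xs \<in> carrier_mat n n" using sXs symm_carrier by auto
  have Wsc: "Ws \<in> carrier_mat n n" using sWs symm_carrier by auto
  show ?thesis
  proof (intro conjI)
    show "\<forall>X. symm n X \<longrightarrow> Fhat \<rho> C ((1 / (\<gamma>s + mtrace \<Sigma>2)) \<cdot>\<^sub>m
           (\<gamma>s \<cdot>\<^sub>m Wb + P * Q2 * \<Sigma>2 * transpose_mat Q2 * transpose_mat P)) P1 X \<le> Fobj \<rho> C X"
      unfolding Wb'_def[symmetric] using FU(3) by blast
    show "let g = (if lmax (- Xs) > 0 then C - \<rho> \<cdot>\<^sub>m outer (col V 0) else C) in
       (\<forall>X. symm n X \<longrightarrow>
          Fhat \<rho> C ((1 / (\<gamma>s + mtrace \<Sigma>2)) \<cdot>\<^sub>m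
             (\<gamma>s \<cdot>\<^sub>m Wb + P * Q2 * \<Sigma>2 * transpose_mat Q2 * transpose_mat P)) P1 X
          \<ge> Fobj \<rho> C Xs + frob g (X - Xs))
       \<and> (\<forall>X. symm n X \<longrightarrow> Fobj \<rho> C X \<ge> Fobj \<rho> C Xs + frob g (X - Xs))"
    proof -
      obtain U \<mu> where U: "U \<in> carrier_mat n n" "transpose_mat U * U = 1\<^sub>m n"
        and Ueig: "\<forall>j<n. (- Xs) *\<^sub>v col U j = \<mu> j \<cdot>\<^sub>v col U j"
        and Uord: "\<forall>i j. i \<le> j \<longrightarrow> j < n \<longrightarrow> \<mu> j \<le> \<mu> i" and UV: "\<forall>j<rc. col V j = col U j"
        using V_eig by blast
      have vU: "v = col U 0" unfolding v_def using UV rc0 by simp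
      have lm: "lmax (- Xs) \<le> \<mu> 0" by (rule top_eig[OF symm_uminus[OF sXs] n0 U Ueig Uord])
      have ov: "outer v \<in> carrier_mat n n" using vc by simp
      have mu0: "frob (outer v) (- Xs) = \<mu> 0"
      proof -
        have mXs: "- Xs \<in> carrier_mat n n" using Xsc by simp
        have "frob (outer v) (- Xs) = v \<bullet> ((- Xs) *\<^sub>v v)" by (rule frob_outer[OF vc mXs])
        also have "(- Xs) *\<^sub>v v = \<mu> 0 \<cdot>\<^sub>v v" using Ueig n0 vU by simp
        finally show ?thesis using vv vc by simp
      qed
      have gen: "frob (outer v) (- X) \<le> lmax (- X)" if X: "symm n X" for X
      proof -
        have mX: "symm n (- X)" by (rule symm_uminus[OF X])
        have mXc: "- X \<in> carrier_mat n n" by (rule symm_carrier[OF mX])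
        have "frob (outer v) (- X) = qf n (fm (- X)) (\<lambda>i. v $ i)" using frob_outer[OF vc mXc] qf_vec[OF mXc vc] by simp
        also have "\<dots> \<le> lmax (- X) * (\<Sum>i<n. (v $ i)^2)" using lmax_props(2)[OF mX n0] by blast
        also have "(\<Sum>i<n. (v $ i)^2) = v \<bullet> v" using vc by (simp add: scalar_prod_def power2_eq_square atLeast0LessThan)
        finally show ?thesis using vv by simp
      qed
      define u where "u = transpose_mat P1 *\<^sub>v v"
      have uc: "u \<in> carrier_vec k1" unfolding u_def using P1c vc by simp
      have PQ1c': "P * Q1 \<in> carrier_mat n rp" using PQ1c unfolding PQ1_def .
      have Hc: "hcat V (P * Q1) \<in> carrier_mat n (rc + rp)" using hcat_carrier[OF V(1) PQ1c'] .
      have "col (hcat V (P * Q1)) 0 \<in> colspace (hcat V (P * Q1))" by (rule col_in_colspace[OF Hc]) (use rc0 in simp)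
      hence "v \<in> colspace (hcat V (P * Q1))" using hcat_col1[OF V(1) PQ1c' rc0] unfolding v_def by simp
      hence vP1: "v \<in> colspace P1" using P1(3) by simp
      have P1u: "P1 *\<^sub>v u = v" unfolding u_def by (rule proj_colspace[OF P1c P1o vP1])
      have uu: "u \<bullet> u = 1"
        using transpose_vec_mult_scalar[OF P1c uc vc] P1u vv unfolding u_def by simp
      have Wv: "\<rho> \<cdot>\<^sub>m outer v \<in> What \<rho> Wb' P1"
      proof -
        have oc: "outer u \<in> carrier_mat k1 k1" using uc by simp
        have "P1 * (\<rho> \<cdot>\<^sub>m outer u) * transpose_mat P1 = \<rho> \<cdot>\<^sub>m (P1 * outer u * transpose_mat P1)"
          using P1c oc by (simp add: mult_smult_distrib[of _ n k1] mult_smult_assoc_mat[of _ n k1] del: assoc_mult_mat)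
        also have "\<dots> = \<rho> \<cdot>\<^sub>m outer v" using BSBt_outer[OF P1c uc] P1u by simp
        finally have e0: "P1 * (\<rho> \<cdot>\<^sub>m outer u) * transpose_mat P1 = \<rho> \<cdot>\<^sub>m outer v" .
        have e: "\<rho> \<cdot>\<^sub>m outer v = 0 \<cdot>\<^sub>m Wb' + P1 * (\<rho> \<cdot>\<^sub>m outer u) * transpose_mat P1"
          unfolding e0 using Wb'c vc by (intro eq_matI) (auto simp: outer_def)
        have ps: "psd (dim_col P1) (\<rho> \<cdot>\<^sub>m outer u)" unfolding k1_def[symmetric] using rho by (intro psd_smult psd_outer uc) auto
        have tr: "mtrace (\<rho> \<cdot>\<^sub>m outer u) = \<rho>" using mtrace_smult[OF oc] mtrace_outer[OF uc] uu by simp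
        show ?thesis unfolding What_def using e ps tr by force
      qed
      have fWv: "frob (\<rho> \<cdot>\<^sub>m outer v) (- X) = \<rho> * frob (outer v) (- X)" if X: "symm n X" for X
        using frob_smult_left[OF ov, of "- X"] X symm_carrier by auto
      show ?thesis
      proof (cases "lmax (- Xs) > 0")
        case True
        have g: "(if lmax (- Xs) > 0 then C - \<rho> \<cdot>\<^sub>m outer (col V 0) else C) = C - \<rho> \<cdot>\<^sub>m outer v"
          using True unfolding v_def by simp
        have key: "Fobj \<rho> C Xs + frob (C - \<rho> \<cdot>\<^sub>m outer v) (X - Xs) \<le> frob C X + \<rho> * frob (outer v) (- X)"
          if X: "symm n X" for X
        proof -
          have Xc: "X \<in> carrier_mat n n" using X symm_carrier by auto
          have ovs: "\<rho> \<cdot>\<^sub>m outer v \<in> carrier_mat n n" using ov by simp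
          have XX: "X - Xs \<in> carrier_mat n n" using Xsc by (simp add: minus_carrier_mat)
          have e1: "frob (C - \<rho> \<cdot>\<^sub>m outer v) (X - Xs) = frob C (X - Xs) - \<rho> * frob (outer v) (X - Xs)"
            using frob_minus_left[OF Cc ovs XX] frob_smult_left[OF ov XX] by simp
          have e2: "frob C (X - Xs) = frob C X - frob C Xs" by (rule frob_minus_right[OF Cc Xc Xsc])
          have e3: "frob (outer v) (X - Xs) = frob (outer v) X - frob (outer v) Xs" by (rule frob_minus_right[OF ov Xc Xsc])
          have e4: "frob (outer v) (- X) = - frob (outer v) X" by (rule frob_uminus_right[OF ov Xc])
          have e5: "frob (outer v) (- Xs) = - frob (outer v) Xs" by (rule frob_uminus_right[OF ov Xsc])
          have e6: "Fobj \<rho> C Xs = frob C Xs + \<rho> * lmax (- Xs)" unfolding Fobj_def using True by simp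
          have m: "\<rho> * lmax (- Xs) \<le> \<rho> * \<mu> 0" using lm rho by (simp add: mult_left_mono)
          have mu: "\<mu> 0 = - frob (outer v) Xs" using mu0 e5 by simp
          have "\<rho> * \<mu> 0 = - (\<rho> * frob (outer v) Xs)" unfolding mu by simp
          hence m2: "\<rho> * lmax (- Xs) \<le> - (\<rho> * frob (outer v) Xs)" using m by linarith
          show ?thesis unfolding e6 e1 e2 e3 e4 using m2 by (simp add: algebra_simps)
        qed
        show ?thesis unfolding Let_def g
        proof (intro conjI allI impI)
          fix X assume X: "symm n X"
          have "Fobj \<rho> C Xs + frob (C - \<rho> \<cdot>\<^sub>m outer v) (X - Xs) \<le> frob C X + frob (\<rho> \<cdot>\<^sub>m outer v) (- X)"
            using key[OF X] fWv[OF X] by simp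
          also have "\<dots> \<le> Fhat \<rho> C Wb' P1 X" by (rule FU(4)[OF X Wv])
          finally show "Fobj \<rho> C Xs + frob (C - \<rho> \<cdot>\<^sub>m outer v) (X - Xs) \<le> Fhat \<rho> C ((1 / (\<gamma>s + mtrace \<Sigma>2)) \<cdot>\<^sub>m
             (\<gamma>s \<cdot>\<^sub>m Wb + P * Q2 * \<Sigma>2 * transpose_mat Q2 * transpose_mat P)) P1 X"
            unfolding Wb'_def .
        next
          fix X assume X: "symm n X"
          have "\<rho> * frob (outer v) (- X) \<le> \<rho> * max (lmax (- X)) 0"
            using gen[OF X] rho by (intro mult_left_mono) auto
          thus "Fobj \<rho> C Xs + frob (C - \<rho> \<cdot>\<^sub>m outer v) (X - Xs) \<le> Fobj \<rho> C X"
            using key[OF X] unfolding Fobj_def by simp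
        qed
      next
        case False
        have g: "(if lmax (- Xs) > 0 then C - \<rho> \<cdot>\<^sub>m outer (col V 0) else C) = C" using False by simp
        have key: "Fobj \<rho> C Xs + frob C (X - Xs) = frob C X" if X: "symm n X" for X
        proof -
          have Xc: "X \<in> carrier_mat n n" using X symm_carrier by auto
          have "max (lmax (- Xs)) 0 = 0" using False by simp
          thus ?thesis unfolding Fobj_def using frob_minus_right[OF Cc Xc Xsc] by simp
        qed
        have z: "0\<^sub>m n n \<in> What \<rho> Wb' P1" using zero_in_What[OF Wb'c P1c] rho by simp
        show ?thesis unfolding Let_def g
        proof (intro conjI allI impI)
          fix X assume X: "symm n X"
          have Xc: "X \<in> carrier_mat n n" using X symm_carrier by auto
          have "frob C X + frob (0\<^sub>m n n) (- X) \<le> Fhat \<rho> C Wb' P1 X" by (rule FU(4)[OF X z])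
          moreover have "frob (0\<^sub>m n n) (- X) = 0" using Xc by (intro frob_zero_left) simp
          ultimately show "Fobj \<rho> C Xs + frob C (X - Xs) \<le> Fhat \<rho> C ((1 / (\<gamma>s + mtrace \<Sigma>2)) \<cdot>\<^sub>m
             (\<gamma>s \<cdot>\<^sub>m Wb + P * Q2 * \<Sigma>2 * transpose_mat Q2 * transpose_mat P)) P1 X"
            unfolding Wb'_def[symmetric] key[OF X] by simp
        next
          fix X assume X: "symm n X"
          have z0: "0 \<le> \<rho> * max (lmax (- X)) 0" using rho by simp
          have k: "Fobj \<rho> C Xs + frob C (X - Xs) = frob C X" by (rule key[OF X])
          have fx: "Fobj \<rho> C X = frob C X + \<rho> * max (lmax (- X)) 0" unfolding Fobj_def ..
          show "Fobj \<rho> C Xs + frob C (X - Xs) \<le> Fobj \<rho> C X" using z0 k fx by linarith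
        qed
      qed
    qed
    show "\<forall>X. symm n X \<longrightarrow> Aop m A X = b \<longrightarrow>
        Fhat \<rho> C ((1 / (\<gamma>s + mtrace \<Sigma>2)) \<cdot>\<^sub>m
           (\<gamma>s \<cdot>\<^sub>m Wb + P * Q2 * \<Sigma>2 * transpose_mat Q2 * transpose_mat P)) P1 X
        \<ge> Fhat \<rho> C Wb P Xs + frob (\<alpha> \<cdot>\<^sub>m (\<Omega> - Xs)) (X - Xs)"
    proof -
      define G where "G = Ws - C + Astar n m A ys"
      have Gc: "G \<in> carrier_mat n n" unfolding G_def by (simp add: Astar_carrier)
      have WsC: "Ws - C \<in> carrier_mat n n" using Cc by (simp add: minus_carrier_mat)
      have minW: "\<forall>W\<in>What \<rho> Wb P. frob (Ws - C) \<Omega> - (b - Aop m A \<Omega>) \<bullet> ys + 1 / (2 * \<alpha>) * (fnorm (Ws - C + Astar n m A ys))\<^sup>2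
        \<le> frob (W - C) \<Omega> - (b - Aop m A \<Omega>) \<bullet> ys + 1 / (2 * \<alpha>) * (fnorm (W - C + Astar n m A ys))\<^sup>2"
        using Ws_min ys_in by blast
      have O2: "frob W (- Xs) \<le> frob Ws (- Xs)" if W: "W \<in> What \<rho> Wb P" for W
      proof -
        have sW: "symm n W" using What_props(1)[OF Wb P W] psd_symm by auto
        show ?thesis unfolding Xs by (rule opt_W[OF Wbc P(1) Ws_in W sWs sW Cc Omc Astar_carrier alpha minW])
      qed
      have Fhat_t: "Fhat \<rho> C Wb P Xs = frob C Xs + frob Ws (- Xs)"
      proof -
        have "(SUP W\<in>What \<rho> Wb P. frob W (- Xs)) = frob Ws (- Xs)"
          using Ws_in O2 by (intro cSup_eq_maximum) auto
        thus ?thesis unfolding Fhat_def by simp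
      qed
      have AXs: "Aop m A Xs = b"
      proof (rule eq_vecI)
        fix k assume "k < dim_vec b"
        hence k: "k < m" using b by simp
        have miny: "\<forall>y\<in>carrier_vec m. frob (Ws - C) \<Omega> - (b - Aop m A \<Omega>) \<bullet> ys + 1 / (2 * \<alpha>) * (fnorm (Ws - C + Astar n m A ys))\<^sup>2
          \<le> frob (Ws - C) \<Omega> - (b - Aop m A \<Omega>) \<bullet> y + 1 / (2 * \<alpha>) * (fnorm (Ws - C + Astar n m A y))\<^sup>2"
          using Ws_min Ws_in by blast
        have Aop_c: "Aop m A \<Omega> \<in> carrier_vec m" unfolding Aop_def by simp
        have dc: "b - Aop m A \<Omega> \<in> carrier_vec m" using b Aop_c by simp
        have d: "(b - Aop m A \<Omega>) $ k = (1 / \<alpha>) * frob G (A k)"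
          unfolding G_def by (rule opt_y[OF WsC Ai ys_in dc alpha miny k])
        have Akc: "A k \<in> carrier_mat n n" using Aic k by simp
        have "Aop m A Xs $ k = frob (A k) Xs" unfolding Aop_def using k by simp
        also have "\<dots> = frob (A k) \<Omega> + (1 / \<alpha>) * frob (A k) G"
          unfolding Xs G_def[symmetric] using Akc Omc Gc by (simp add: frob_add_right[of _ n] frob_smult_right[of _ n])
        also have "frob (A k) G = frob G (A k)" by (rule frob_comm[OF Akc Gc])
        also have "frob (A k) \<Omega> = Aop m A \<Omega> $ k" unfolding Aop_def using k by simp
        also have "(1 / \<alpha>) * frob G (A k) = b $ k - Aop m A \<Omega> $ k" using d b Aop_c k by simp
        finally show "Aop m A Xs $ k = b $ k" by simp
      qed (use b in \<open>simp add: Aop_def\<close>)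
      have WsNew: "Ws \<in> What \<rho> Wb' P1"
      proof -
        define K where "K = transpose_mat P1 * PQ1"
        have Kc: "K \<in> carrier_mat k1 rp" unfolding K_def using P1c PQ1c by simp
        have PQ1c': "P * Q1 \<in> carrier_mat n rp" using PQ1c unfolding PQ1_def .
        have Hc: "hcat V (P * Q1) \<in> carrier_mat n (rc + rp)" using hcat_carrier[OF V(1) PQ1c'] .
        have colin: "col PQ1 j \<in> colspace P1" if j: "j < rp" for j
        proof -
          have "col (hcat V (P * Q1)) (rc + j) \<in> colspace (hcat V (P * Q1))"
            by (rule col_in_colspace[OF Hc]) (use j in simp)
          thus ?thesis using hcat_col2[OF V(1) PQ1c' j] P1(3) unfolding PQ1_def by simp
        qed
        have P1K: "P1 * K = PQ1"
        proof (rule mat_col_eqI)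
          fix j assume "j < dim_col PQ1"
          hence j: "j < rp" using PQ1c by simp
          have "col (P1 * K) j = P1 *\<^sub>v col K j" by (rule col_mult2[OF P1c Kc j])
          also have "col K j = transpose_mat P1 *\<^sub>v col PQ1 j" unfolding K_def
            by (rule col_mult2[OF _ PQ1c j]) (use P1c in simp)
          also have "P1 *\<^sub>v (transpose_mat P1 *\<^sub>v col PQ1 j) = col PQ1 j" by (rule proj_colspace[OF P1c P1o colin[OF j]])
          finally show "col (P1 * K) j = col PQ1 j" .
        qed (use P1c Kc PQ1c in auto)
        have KK: "transpose_mat K * K = 1\<^sub>m rp"
          using gram_prod[OF P1c P1o Kc] P1K PQ1o by simp
        define S' where "S' = K * \<Sigma>1 * transpose_mat K"
        have pS': "psd k1 S'" unfolding S'_def by (rule psd_BSBt[OF pS1 Kc])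
        have tS': "mtrace S' = mtrace \<Sigma>1" unfolding S'_def by (rule mtrace_BSBt[OF Kc KK Sig(1)])
        have e1: "P1 * S' * transpose_mat P1 = PQ1 * \<Sigma>1 * transpose_mat PQ1"
        proof -
          have "P1 * S' * transpose_mat P1 = (P1 * K) * \<Sigma>1 * (transpose_mat K * transpose_mat P1)"
            unfolding S'_def by (rule sandwich4[OF P1c Kc Sig(1)]) (use P1c in simp)
          also have "transpose_mat K * transpose_mat P1 = transpose_mat (P1 * K)"
            by (rule transpose_mult[OF P1c Kc, symmetric])
          finally show ?thesis unfolding P1K .
        qed
        have X1c: "PQ1 * \<Sigma>1 * transpose_mat PQ1 \<in> carrier_mat n n" using PQ1c Sig(1) by simp
        have X2c: "PQ2 * \<Sigma>2 * transpose_mat PQ2 \<in> carrier_mat n n" using PQ2c Sig(2) by simp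
        have e2: "P * Ss * transpose_mat P = PQ1 * \<Sigma>1 * transpose_mat PQ1 + PQ2 * \<Sigma>2 * transpose_mat PQ2"
        proof -
          have Y1: "Q1 * \<Sigma>1 * transpose_mat Q1 \<in> carrier_mat r r" and Y2: "Q2 * \<Sigma>2 * transpose_mat Q2 \<in> carrier_mat r r"
            using Q Sig by auto
          have Pt: "transpose_mat P \<in> carrier_mat r n" using P by simp
          have "P * Ss * transpose_mat P = P * (Q1 * \<Sigma>1 * transpose_mat Q1) * transpose_mat P + P * (Q2 * \<Sigma>2 * transpose_mat Q2) * transpose_mat P"
            unfolding Ss_eig using P(1) Y1 Y2 Pt
            by (simp add: mult_add_distrib_mat[of _ n r] add_mult_distrib_mat[of _ n r] del: assoc_mult_mat)
          also have "P * (Q1 * \<Sigma>1 * transpose_mat Q1) * transpose_mat P = PQ1 * \<Sigma>1 * (transpose_mat Q1 * transpose_mat P)"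
            unfolding PQ1_def by (rule sandwich4[OF P(1) Q(1) Sig(1) Pt])
          also have "transpose_mat Q1 * transpose_mat P = transpose_mat PQ1"
            unfolding PQ1_def by (rule transpose_mult[OF P(1) Q(1), symmetric])
          also have "P * (Q2 * \<Sigma>2 * transpose_mat Q2) * transpose_mat P = PQ2 * \<Sigma>2 * (transpose_mat Q2 * transpose_mat P)"
            unfolding PQ2_def by (rule sandwich4[OF P(1) Q(2) Sig(2) Pt])
          also have "transpose_mat Q2 * transpose_mat P = transpose_mat PQ2"
            unfolding PQ2_def by (rule transpose_mult[OF P(1) Q(2), symmetric])
          finally show ?thesis .
        qed
        have e3: "c \<cdot>\<^sub>m Wb' = M2" unfolding Wb'e using M2c cpos by (intro eq_matI) auto
        have WsEq: "Ws = c \<cdot>\<^sub>m Wb' + P1 * S' * transpose_mat P1"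
        proof -
          have "Ws = \<gamma>s \<cdot>\<^sub>m Wb + (PQ1 * \<Sigma>1 * transpose_mat PQ1 + PQ2 * \<Sigma>2 * transpose_mat PQ2)"
            unfolding Ws_eq e2 ..
          also have "\<dots> = M2 + PQ1 * \<Sigma>1 * transpose_mat PQ1"
            unfolding M2_def by (rule add_rearr[OF Wbc X1c X2c])
          finally show ?thesis unfolding e3 e1 .
        qed
        have "c + mtrace S' \<le> \<rho>" unfolding tS' c_def using trSs Ss(3) by simp
        thus ?thesis unfolding What_def using WsEq pS' cpos k1_def by fastforce
      qed
      show ?thesis
      proof (intro allI impI)
        fix X assume X: "symm n X" and AX: "Aop m A X = b"
        have Xc: "X \<in> carrier_mat n n" using X symm_carrier by auto
        have XX: "X - Xs \<in> carrier_mat n n" using Xsc by (simp add: minus_carrier_mat)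
        have lhs: "frob C X + frob Ws (- X) \<le> Fhat \<rho> C Wb' P1 X" by (rule FU(4)[OF X WsNew])
        have aeq: "\<alpha> \<cdot>\<^sub>m (\<Omega> - Xs) = (-1) \<cdot>\<^sub>m G"
          unfolding Xs G_def[symmetric] using Omc Gc alpha by (intro eq_matI) (auto simp: field_simps)
        have fA: "frob (Astar n m A ys) (X - Xs) = 0"
        proof -
          have "frob (Astar n m A ys) (X - Xs) = (\<Sum>k<m. ys $ k * frob (A k) (X - Xs))"
            by (rule frob_Astar[OF Aic XX])
          also have "\<dots> = 0"
          proof (intro sum.neutral ballI)
            fix k assume "k \<in> {..<m}"
            hence k: "k < m" by simp
            have Akc: "A k \<in> carrier_mat n n" using Aic k by simp
            have "frob (A k) (X - Xs) = frob (A k) X - frob (A k) Xs" by (rule frob_minus_right[OF Akc Xc Xsc])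
            also have "frob (A k) X = b $ k" using AX k unfolding Aop_def by (metis index_vec)
            also have "frob (A k) Xs = b $ k" using AXs k unfolding Aop_def by (metis index_vec)
            finally show "ys $ k * frob (A k) (X - Xs) = 0" by simp
          qed
          finally show ?thesis .
        qed
        have fG: "frob G (X - Xs) = frob Ws (X - Xs) - frob C (X - Xs)"
          unfolding G_def using frob_add_left[OF WsC Astar_carrier XX] frob_minus_left[OF Wsc Cc XX] fA by simp
        have "Fhat \<rho> C Wb P Xs + frob (\<alpha> \<cdot>\<^sub>m (\<Omega> - Xs)) (X - Xs) = frob C X + frob Ws (- X)"
          unfolding Fhat_t aeq frob_smult_left[OF Gc XX] fG
          using frob_minus_right[OF Wsc Xc Xsc] frob_minus_right[OF Cc Xc Xsc]
            frob_uminus_right[OF Wsc Xc] frob_uminus_right[OF Wsc Xsc] by simp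
        thus "Fhat \<rho> C Wb P Xs + frob (\<alpha> \<cdot>\<^sub>m (\<Omega> - Xs)) (X - Xs) \<le> Fhat \<rho> C ((1 / (\<gamma>s + mtrace \<Sigma>2)) \<cdot>\<^sub>m
           (\<gamma>s \<cdot>\<^sub>m Wb + P * Q2 * \<Sigma>2 * transpose_mat Q2 * transpose_mat P)) P1 X"
          using lhs unfolding Wb'_def by simp
      qed
    qed
  qed
qed

end
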